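(* Let $\mathcal{W}$ be a finite set, let $(X_t)_{t\ge 1}$ be a time-homogeneous first-order Markov chain on $\mathcal{W}$ with initial distribution $p_{x_1}$ and transition probabilities $q_x(x_{t+1}\mid x_t)$, and let $d:\mathcal{W}\times\mathcal{W}\to\mathbb{R}$ be a distortion measure and $\bar D$ a threshold. Consider the optimization problem $$\min_{\{q_t(y_t\mid x^t,y^{t-1})\}_{t\ge 1}} \ \lim_{n\to\infty}\frac1n\sum_{t=1}^n I^{\boldsymbol q}(X^t;Y_t\mid Y^{t-1})\quad\text{subject to}\quad \lim_{n\to\infty}\mathbb{E}\Big[\frac1n\sum_{t=1}^n d(X_t,Y_t)\Big]\le \bar D,$$ where the minimization is over the set $\mathcal{Q}_H$ of history-dependent release policies. Then there is no loss of optimality in restricting this minimization to the set $\mathcal{Q}_S\subseteq\mathcal{Q}_H$ of simplified policies, i.e. policies $\boldsymbol q_s=\{q^s_t(y_t\mid x_t,x_{t-1},y^{t-1})\}_{t\ge1}$. Furthermore, for any $\boldsymbol q_s\in\mathcal{Q}_S$ and any $n$, the induced information leakage satisfies $$I^{\boldsymbol q_s}(X^n;Y^n)=\sum_{t=1}^n I^{\boldsymbol q_s}(X_t,X_{t-1};Y_t\mid Y^{t-1})=\sum_{t=1}^n\ \sum_{y^t\in\mathcal{W}^t,\ x_t,x_{t-1}\in\mathcal{W}} P^{\boldsymbol q_s}(x_t,x_{t-1},y^t)\log\frac{q^s_t(y_t\mid x_t,x_{t-1},y^{t-1})}{P^{\boldsymbol q_s}(y_t\mid y^{t-1})}.$$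
   Context: Notation: $X^t=(X_1,\dots,X_t)$, $Y^{t-1}=(Y_1,\dots,Y_{t-1})$, with $Y^0$ empty; at $t=1$ terms involving $X_0$ are absent (e.g. $q_1(y_1\mid x_1)$). A history-dependent location release policy is a sequence $\boldsymbol q=\{q_t(y_t\mid x^t,y^{t-1})\}_{t\ge1}$ of conditional probability distributions on $\mathcal{W}$ (so $\sum_{y_t\in\mathcal W}q_t(y_t\mid x^t,y^{t-1})=1$); $\mathcal{Q}_H$ denotes the set of all such policies. The released locations $Y_t\in\mathcal{W}$ are generated so that the joint law is $$P^{\boldsymbol q}(X^n=x^n,Y^n=y^n)=p_{x_1}(x_1)q_1(y_1\mid x_1)\prod_{t=2}^n q_x(x_t\mid x_{t-1})\,q_t(y_t\mid x^t,y^{t-1}).$$ $I^{\boldsymbol q}$, $P^{\boldsymbol q}$ and the expectation denote mutual information, probabilities and expectation under this joint law. $\mathcal{Q}_S$ is the set of policies in $\mathcal{Q}_H$ of the form $q^s_t(y_t\mid x_t,x_{t-1},y^{t-1})$, i.e. depending on the true trajectory only through the current and previous true locations (and on the whole released history). *)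

theory Defs
  imports "HOL-Analysis.Analysis"
begin

text \<open>Trajectories x^n, y^n are lists of length n over W; X_t = xs ! (t-1).\<close>

definition lists_n :: "'a set \<Rightarrow> nat \<Rightarrow> 'a list set" where
  "lists_n W n = {xs. set xs \<subseteq> W \<and> length xs = n}"

text \<open>Markov chain: initial pmf p1, transition kernel Q x x' = q_x(x' | x).\<close>
definition markov_chain :: "'a set \<Rightarrow> ('a \<Rightarrow> real) \<Rightarrow> ('a \<Rightarrow> 'a \<Rightarrow> real) \<Rightarrow> bool" where
  "markov_chain W p1 Q \<longleftrightarrow>
     (\<forall>x\<in>W. p1 x \<ge> 0) \<and> (\<Sum>x\<in>W. p1 x) = 1 \<and>
     (\<forall>x\<in>W. (\<forall>x'\<in>W. Q x x' \<ge> 0) \<and> (\<Sum>x'\<in>W. Q x x') = 1)"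

text \<open>A history-dependent policy: q t xs ys y = q_t(y | x^t = xs, y^{t-1} = ys).\<close>
definition QH :: "'a set \<Rightarrow> (nat \<Rightarrow> 'a list \<Rightarrow> 'a list \<Rightarrow> 'a \<Rightarrow> real) set" where
  "QH W = {q. \<forall>t\<ge>1. \<forall>xs\<in>lists_n W t. \<forall>ys\<in>lists_n W (t - 1).
              (\<forall>y\<in>W. q t xs ys y \<ge> 0) \<and> (\<Sum>y\<in>W. q t xs ys y) = 1}"

definition prev :: "'a list \<Rightarrow> 'a option" where
  "prev xs = (if length xs \<ge> 2 then Some (xs ! (length xs - 2)) else None)"

definition QS :: "'a set \<Rightarrow> (nat \<Rightarrow> 'a list \<Rightarrow> 'a list \<Rightarrow> 'a \<Rightarrow> real) set" where
  "QS W = {q \<in> QH W. \<exists>qs :: nat \<Rightarrow> 'a \<Rightarrow> 'a option \<Rightarrow> 'a list \<Rightarrow> 'a \<Rightarrow> real.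
             \<forall>t\<ge>1. \<forall>xs\<in>lists_n W t. \<forall>ys\<in>lists_n W (t - 1). \<forall>y\<in>W.
               q t xs ys y = qs t (last xs) (prev xs) ys y}"

text \<open>Joint law P^q(X^n = xs, Y^n = ys).\<close>
definition joint :: "('a \<Rightarrow> real) \<Rightarrow> ('a \<Rightarrow> 'a \<Rightarrow> real) \<Rightarrow> (nat \<Rightarrow> 'a list \<Rightarrow> 'a list \<Rightarrow> 'a \<Rightarrow> real)
                      \<Rightarrow> nat \<Rightarrow> 'a list \<times> 'a list \<Rightarrow> real" where
  "joint p1 Q q n = (\<lambda>(xs, ys). if n = 0 then 1 else
      p1 (xs ! 0) * q 1 [xs ! 0] [] (ys ! 0) *
      (\<Prod>t\<in>{2..n}. Q (xs ! (t - 2)) (xs ! (t - 1)) * q t (take t xs) (take (t - 1) ys) (ys ! (t - 1))))"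

definition Omega :: "'a set \<Rightarrow> nat \<Rightarrow> ('a list \<times> 'a list) set" where
  "Omega W n = lists_n W n \<times> lists_n W n"

definition Pr :: "'w set \<Rightarrow> ('w \<Rightarrow> real) \<Rightarrow> ('w \<Rightarrow> bool) \<Rightarrow> real" where
  "Pr S pm E = (\<Sum>\<omega>\<in>{\<omega>\<in>S. E \<omega>}. pm \<omega>)"

definition cmi :: "'w set \<Rightarrow> ('w \<Rightarrow> real) \<Rightarrow> ('w \<Rightarrow> 'b) \<Rightarrow> ('w \<Rightarrow> 'c) \<Rightarrow> ('w \<Rightarrow> 'd) \<Rightarrow> real" where
  "cmi S pm A B C =
     (\<Sum>(a, b, c)\<in>A ` S \<times> B ` S \<times> C ` S.
        let pabc = Pr S pm (\<lambda>\<omega>. A \<omega> = a \<and> B \<omega> = b \<and> C \<omega> = c);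
            pc = Pr S pm (\<lambda>\<omega>. C \<omega> = c);
            pac = Pr S pm (\<lambda>\<omega>. A \<omega> = a \<and> C \<omega> = c);
            pbc = Pr S pm (\<lambda>\<omega>. B \<omega> = b \<and> C \<omega> = c)
        in if pabc > 0 then pabc * ln (pabc * pc / (pac * pbc)) else 0)"

definition mi :: "'w set \<Rightarrow> ('w \<Rightarrow> real) \<Rightarrow> ('w \<Rightarrow> 'b) \<Rightarrow> ('w \<Rightarrow> 'c) \<Rightarrow> real" where
  "mi S pm A B = cmi S pm A B (\<lambda>_. ())"

text \<open>(1/n) sum_{t=1}^n I^q(X^t; Y_t | Y^{t-1}), computed under the horizon-n law.\<close>
definition leak_avg :: "'a set \<Rightarrow> ('a \<Rightarrow> real) \<Rightarrow> ('a \<Rightarrow> 'a \<Rightarrow> real)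
      \<Rightarrow> (nat \<Rightarrow> 'a list \<Rightarrow> 'a list \<Rightarrow> 'a \<Rightarrow> real) \<Rightarrow> nat \<Rightarrow> real" where
  "leak_avg W p1 Q q n = (1 / real n) *
     (\<Sum>t = 1..n. cmi (Omega W n) (joint p1 Q q n)
        (\<lambda>(xs, ys). take t xs) (\<lambda>(xs, ys). ys ! (t - 1)) (\<lambda>(xs, ys). take (t - 1) ys))"

definition dist_avg :: "'a set \<Rightarrow> ('a \<Rightarrow> real) \<Rightarrow> ('a \<Rightarrow> 'a \<Rightarrow> real)
      \<Rightarrow> (nat \<Rightarrow> 'a list \<Rightarrow> 'a list \<Rightarrow> 'a \<Rightarrow> real) \<Rightarrow> ('a \<Rightarrow> 'a \<Rightarrow> real) \<Rightarrow> nat \<Rightarrow> real" where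
  "dist_avg W p1 Q q d n =
     (\<Sum>(xs, ys)\<in>Omega W n. joint p1 Q q n (xs, ys) *
        ((1 / real n) * (\<Sum>t = 1..n. d (xs ! (t - 1)) (ys ! (t - 1)))))"

text \<open>Objective and feasibility (limits read as limsup).\<close>
definition objective :: "'a set \<Rightarrow> ('a \<Rightarrow> real) \<Rightarrow> ('a \<Rightarrow> 'a \<Rightarrow> real)
      \<Rightarrow> (nat \<Rightarrow> 'a list \<Rightarrow> 'a list \<Rightarrow> 'a \<Rightarrow> real) \<Rightarrow> ereal" where
  "objective W p1 Q q = limsup (\<lambda>n. ereal (leak_avg W p1 Q q n))"

definition feasible :: "'a set \<Rightarrow> ('a \<Rightarrow> real) \<Rightarrow> ('a \<Rightarrow> 'a \<Rightarrow> real)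
      \<Rightarrow> ('a \<Rightarrow> 'a \<Rightarrow> real) \<Rightarrow> real \<Rightarrow> (nat \<Rightarrow> 'a list \<Rightarrow> 'a list \<Rightarrow> 'a \<Rightarrow> real) \<Rightarrow> bool" where
  "feasible W p1 Q d Dbar q \<longleftrightarrow> limsup (\<lambda>n. ereal (dist_avg W p1 Q q d n)) \<le> ereal Dbar"

end

theory Submission
  imports Defs
begin

lemma Pr_cong: "(\<And>w. w \<in> S \<Longrightarrow> E w = E' w) \<Longrightarrow> Pr S pm E = Pr S pm E'"
  unfolding Pr_def by (rule sum.cong) auto

lemma Pr_if: "finite S \<Longrightarrow> Pr S pm E = (\<Sum>w\<in>S. if E w then pm w else 0)"
  unfolding Pr_def by (simp add: sum.inter_filter)

lemma Pr_nonneg: "(\<And>w. w \<in> S \<Longrightarrow> pm w \<ge> 0) \<Longrightarrow> Pr S pm E \<ge> 0"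
  unfolding Pr_def by (rule sum_nonneg) auto

lemma Pr_ge_point: "finite S \<Longrightarrow> (\<And>w. w \<in> S \<Longrightarrow> pm w \<ge> 0) \<Longrightarrow> w0 \<in> S \<Longrightarrow> E w0 \<Longrightarrow> pm w0 \<le> Pr S pm E"
  unfolding Pr_def by (rule member_le_sum) auto

lemma Pr_pos: assumes "finite S" "\<And>w. w \<in> S \<Longrightarrow> pm w \<ge> 0" "w0 \<in> S" "pm w0 > 0" "E w0" shows "Pr S pm E > 0"
  using Pr_ge_point[of S pm w0 E] assms by fastforce

lemma Pr_mono: "finite S \<Longrightarrow> (\<And>w. w \<in> S \<Longrightarrow> pm w \<ge> 0) \<Longrightarrow> (\<And>w. w \<in> S \<Longrightarrow> E w \<Longrightarrow> E' w) \<Longrightarrow> Pr S pm E \<le> Pr S pm E'"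
  unfolding Pr_def by (rule sum_mono2) auto

lemma Pr_false: assumes "\<And>w. w \<in> S \<Longrightarrow> \<not> E w" shows "Pr S pm E = 0"
  unfolding Pr_def by (rule sum.neutral) (use assms in auto)

lemma sum_Pr_group:
  assumes "finite S" "finite T" "\<And>w. w \<in> S \<Longrightarrow> G w \<in> T"
  shows "(\<Sum>z\<in>T. Pr S pm (\<lambda>w. G w = z) * L z) = (\<Sum>w\<in>S. pm w * L (G w))"
proof -
  have sub: "G ` S \<subseteq> T" using assms(3) by auto
  have "(\<Sum>w\<in>S. pm w * L (G w)) = (\<Sum>z\<in>T. \<Sum>w\<in>{w. w\<in>S \<and> G w = z}. pm w * L (G w))"
    using sum.group[OF assms(1,2) sub, of "\<lambda>w. pm w * L (G w)"] by (rule sym)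
  also have "\<dots> = (\<Sum>z\<in>T. Pr S pm (\<lambda>w. G w = z) * L z)"
    unfolding Pr_def sum_distrib_right by (rule sum.cong) auto
  finally show ?thesis by simp
qed

lemma Pr_partition:
  assumes "finite S"
  shows "(\<Sum>b\<in>B ` S. Pr S pm (\<lambda>w. E w \<and> B w = b)) = Pr S pm E"
proof -
  have sub: "B ` {w\<in>S. E w} \<subseteq> B ` S" by auto
  have f1: "finite {w\<in>S. E w}" using assms by simp
  have f2: "finite (B ` S)" using assms by simp
  have "Pr S pm E = (\<Sum>b\<in>B ` S. \<Sum>w\<in>{w. w\<in>{w\<in>S. E w} \<and> B w = b}. pm w)"
    unfolding Pr_def by (rule sum.group[OF f1 f2 sub, symmetric])
  also have "\<dots> = (\<Sum>b\<in>B ` S. Pr S pm (\<lambda>w. E w \<and> B w = b))"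
    unfolding Pr_def by (rule sum.cong) (auto intro: sum.cong)
  finally show ?thesis by simp
qed

definition cmiL where "cmiL S pm A B C w = ln (Pr S pm (\<lambda>w'. A w' = A w \<and> B w' = B w \<and> C w' = C w) * Pr S pm (\<lambda>w'. C w' = C w)
   / (Pr S pm (\<lambda>w'. A w' = A w \<and> C w' = C w) * Pr S pm (\<lambda>w'. B w' = B w \<and> C w' = C w)))"

lemma cmi_pointwise:
  assumes "finite S" "\<And>w. w \<in> S \<Longrightarrow> pm w \<ge> 0"
  shows "cmi S pm A B C = (\<Sum>w\<in>S. pm w * cmiL S pm A B C w)"
proof -
  define K where "K w = (A w, B w, C w)" for w
  define L where "L = (\<lambda>(a,b,c). ln (Pr S pm (\<lambda>w. A w = a \<and> B w = b \<and> C w = c) * Pr S pm (\<lambda>w. C w = c)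
      / (Pr S pm (\<lambda>w. A w = a \<and> C w = c) * Pr S pm (\<lambda>w. B w = b \<and> C w = c))))"
  have PK: "Pr S pm (\<lambda>w. K w = (a,b,c)) = Pr S pm (\<lambda>w. A w = a \<and> B w = b \<and> C w = c)" for a b c
    unfolding K_def by simp
  have ifeq: "0 \<le> P \<Longrightarrow> (if 0 < P then P * l else 0) = P * l" for P l :: real by auto
  have "cmi S pm A B C = (\<Sum>(a,b,c)\<in>A ` S \<times> B ` S \<times> C ` S. Pr S pm (\<lambda>w. A w = a \<and> B w = b \<and> C w = c) * L (a,b,c))"
    unfolding cmi_def Let_def L_def
    by (rule sum.cong[OF refl]) (clarsimp simp: ifeq[OF Pr_nonneg[OF assms(2)]])
  also have "\<dots> = (\<Sum>z\<in>A ` S \<times> B ` S \<times> C ` S. Pr S pm (\<lambda>w. K w = z) * L z)"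
    by (rule sum.cong[OF refl]) (clarsimp simp: PK)
  also have "\<dots> = (\<Sum>w\<in>S. pm w * L (K w))"
    by (rule sum_Pr_group) (auto simp: assms K_def)
  also have "\<dots> = (\<Sum>w\<in>S. pm w * cmiL S pm A B C w)" unfolding cmiL_def L_def K_def by simp
  finally show ?thesis .
qed

lemma cmi_cong:
  assumes "\<And>w. w \<in> S \<Longrightarrow> A w = A' w" "\<And>w. w \<in> S \<Longrightarrow> B w = B' w" "\<And>w. w \<in> S \<Longrightarrow> C w = C' w"
  shows "cmi S pm A B C = cmi S pm A' B' C'"
proof -
  have i: "A ` S = A' ` S" "B ` S = B' ` S" "C ` S = C' ` S" using assms by auto
  have p: "Pr S pm (\<lambda>w. A w = a \<and> B w = b \<and> C w = c) = Pr S pm (\<lambda>w. A' w = a \<and> B' w = b \<and> C' w = c)"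
    "Pr S pm (\<lambda>w. C w = c) = Pr S pm (\<lambda>w. C' w = c)"
    "Pr S pm (\<lambda>w. A w = a \<and> C w = c) = Pr S pm (\<lambda>w. A' w = a \<and> C' w = c)"
    "Pr S pm (\<lambda>w. B w = b \<and> C w = c) = Pr S pm (\<lambda>w. B' w = b \<and> C' w = c)"
    for a b c by (rule Pr_cong; simp add: assms)+
  show ?thesis unfolding cmi_def i p by simp
qed

lemma Pr_dist_eq:
  assumes "finite S" "\<And>z. Pr S pm1 (\<lambda>w. G w = z) = Pr S pm2 (\<lambda>w. G w = z)"
   "\<And>w. w \<in> S \<Longrightarrow> E w = E' (G w)"
  shows "Pr S pm1 E = Pr S pm2 E"
proof -
  have "Pr S pm E = (\<Sum>z\<in>G ` S. Pr S pm (\<lambda>w. G w = z) * (if E' z then 1 else 0))" for pm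
  proof -
    have "(\<Sum>z\<in>G ` S. Pr S pm (\<lambda>w. G w = z) * (if E' z then 1 else 0)) = (\<Sum>w\<in>S. pm w * (if E' (G w) then 1 else 0))"
      by (rule sum_Pr_group) (auto simp: assms(1))
    also have "\<dots> = Pr S pm E" unfolding Pr_if[OF assms(1)] by (rule sum.cong) (auto simp: assms(3))
    finally show ?thesis by simp
  qed
  then show ?thesis using assms(2) by simp
qed

lemma expect_dist_eq:
  assumes "finite S" "\<And>z. Pr S pm1 (\<lambda>w. G w = z) = Pr S pm2 (\<lambda>w. G w = z)"
  shows "(\<Sum>w\<in>S. pm1 w * F (G w)) = (\<Sum>w\<in>S. pm2 w * F (G w))"
proof -
  have "(\<Sum>w\<in>S. pm w * F (G w)) = (\<Sum>z\<in>G ` S. Pr S pm (\<lambda>w. G w = z) * F z)" for pm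
    by (rule sum_Pr_group[symmetric]) (auto simp: assms(1))
  then show ?thesis using assms(2) by simp
qed

lemma cmi_dist_eq:
  assumes "finite S" "\<And>z. Pr S pm1 (\<lambda>w. G w = z) = Pr S pm2 (\<lambda>w. G w = z)"
    "\<And>w. w \<in> S \<Longrightarrow> A w = A' (G w)" "\<And>w. w \<in> S \<Longrightarrow> B w = B' (G w)" "\<And>w. w \<in> S \<Longrightarrow> C w = C' (G w)"
  shows "cmi S pm1 A B C = cmi S pm2 A B C"
proof -
  have p1: "Pr S pm1 (\<lambda>w. A w = a \<and> B w = b \<and> C w = c) = Pr S pm2 (\<lambda>w. A w = a \<and> B w = b \<and> C w = c)" for a b c
    by (rule Pr_dist_eq[OF assms(1,2), where E'="\<lambda>z. A' z = a \<and> B' z = b \<and> C' z = c"]) (simp add: assms(3-5))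
  have p2: "Pr S pm1 (\<lambda>w. C w = c) = Pr S pm2 (\<lambda>w. C w = c)" for c
    by (rule Pr_dist_eq[OF assms(1,2), where E'="\<lambda>z. C' z = c"]) (simp add: assms(3-5))
  have p3: "Pr S pm1 (\<lambda>w. A w = a \<and> C w = c) = Pr S pm2 (\<lambda>w. A w = a \<and> C w = c)" for a c
    by (rule Pr_dist_eq[OF assms(1,2), where E'="\<lambda>z. A' z = a \<and> C' z = c"]) (simp add: assms(3-5))
  have p4: "Pr S pm1 (\<lambda>w. B w = b \<and> C w = c) = Pr S pm2 (\<lambda>w. B w = b \<and> C w = c)" for b c
    by (rule Pr_dist_eq[OF assms(1,2), where E'="\<lambda>z. B' z = b \<and> C' z = c"]) (simp add: assms(3-5))
  show ?thesis unfolding cmi_def p1 p2 p3 p4 by simp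
qed

definition trn :: "('a \<Rightarrow> real) \<Rightarrow> ('a \<Rightarrow> 'a \<Rightarrow> real) \<Rightarrow> 'a list \<Rightarrow> 'a \<Rightarrow> real" where
  "trn p1 Q xs x = (if xs = [] then p1 x else Q (last xs) x)"

lemma joint_Suc:
  assumes "length xs = n" "length ys = n"
  shows "joint p1 Q q (Suc n) (xs @ [x], ys @ [y]) = joint p1 Q q n (xs, ys) * trn p1 Q xs x * q (Suc n) (xs @ [x]) ys y"
proof (cases n)
  case 0 then show ?thesis using assms by (simp add: joint_def trn_def)
next
  case (Suc m)
  have n1: "1 \<le> n" using Suc by simp
  have xs0a: "(xs @ [x]) ! 0 = xs ! 0" by (cases xs) (use assms Suc in auto)
  have xs0b: "(ys @ [y]) ! 0 = ys ! 0" by (cases ys) (use assms Suc in auto)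
  note xs0 = xs0a xs0b
  have ins: "{2..Suc n} = insert (Suc n) {2..n}" using n1 by auto
  have pc: "(\<Prod>t\<in>{2..n}. Q ((xs@[x]) ! (t - 2)) ((xs@[x]) ! (t - 1)) * q t (take t (xs@[x])) (take (t - 1) (ys@[y])) ((ys@[y]) ! (t - 1)))
      = (\<Prod>t\<in>{2..n}. Q (xs ! (t - 2)) (xs ! (t - 1)) * q t (take t xs) (take (t - 1) ys) (ys ! (t - 1)))"
    by (rule prod.cong) (use assms n1 in \<open>auto simp: nth_append\<close>)
  have lt: "Q ((xs@[x]) ! (Suc n - 2)) ((xs@[x]) ! (Suc n - 1)) * q (Suc n) (take (Suc n) (xs@[x])) (take (Suc n - 1) (ys@[y])) ((ys@[y]) ! (Suc n - 1))
       = trn p1 Q xs x * q (Suc n) (xs@[x]) ys y"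
  proof -
    have ne: "xs \<noteq> []" using assms n1 by auto
    have e1: "(xs@[x]) ! (Suc n - 2) = last xs" using ne assms n1 by (simp add: nth_append last_conv_nth)
    have e2: "(xs@[x]) ! (Suc n - 1) = x" "(ys@[y]) ! (Suc n - 1) = y" using assms by (simp_all add: nth_append)
    have e3: "take (Suc n) (xs@[x]) = xs@[x]" "take (Suc n - 1) (ys@[y]) = ys" using assms by simp_all
    show ?thesis unfolding e1 e2 e3 trn_def using ne by simp
  qed
  have sp: "(\<Prod>t\<in>{2..Suc n}. F t) = F (Suc n) * (\<Prod>t\<in>{2..n}. F t)" for F :: "nat \<Rightarrow> real"
    unfolding ins by (simp add: prod.insert)
  have A: "joint p1 Q q (Suc n) (xs @ [x], ys @ [y]) = p1 ((xs@[x]) ! 0) * q 1 [(xs@[x]) ! 0] [] ((ys@[y]) ! 0) *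
     (\<Prod>t\<in>{2..Suc n}. Q ((xs@[x]) ! (t - 2)) ((xs@[x]) ! (t - 1)) * q t (take t (xs@[x])) (take (t - 1) (ys@[y])) ((ys@[y]) ! (t - 1)))"
    unfolding joint_def prod.case by (simp only: nat.distinct if_False)
  have B: "joint p1 Q q n (xs, ys) = p1 (xs ! 0) * q 1 [xs ! 0] [] (ys ! 0) *
     (\<Prod>t\<in>{2..n}. Q (xs ! (t - 2)) (xs ! (t - 1)) * q t (take t xs) (take (t - 1) ys) (ys ! (t - 1)))"
    unfolding joint_def prod.case using Suc by (simp only: nat.distinct if_False)
  show ?thesis unfolding A B sp lt pc xs0 by (simp add: mult_ac)
qed

lemma lists_n_Suc: "lists_n W (Suc n) = (\<lambda>(xs,x). xs @ [x]) ` (lists_n W n \<times> W)"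
proof
  show "(\<lambda>(xs,x). xs @ [x]) ` (lists_n W n \<times> W) \<subseteq> lists_n W (Suc n)" unfolding lists_n_def by auto
  show "lists_n W (Suc n) \<subseteq> (\<lambda>(xs,x). xs @ [x]) ` (lists_n W n \<times> W)"
  proof
    fix xs assume xs: "xs \<in> lists_n W (Suc n)"
    then have ne: "xs \<noteq> []" unfolding lists_n_def by auto
    have "xs = butlast xs @ [last xs]" using ne by simp
    moreover have "(butlast xs, last xs) \<in> lists_n W n \<times> W" using xs ne unfolding lists_n_def
      by (auto dest: in_set_butlastD)
    ultimately show "xs \<in> (\<lambda>(xs,x). xs @ [x]) ` (lists_n W n \<times> W)" by (auto intro!: image_eqI)
  qed
qed

lemma sum_lists_Suc: "(\<Sum>v\<in>lists_n W (Suc n). F v) = (\<Sum>u\<in>lists_n W n. \<Sum>x\<in>W. F (u @ [x]))"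
proof -
  have inj: "inj_on (\<lambda>(xs,x). xs @ [x]) (lists_n W n \<times> W)" by (auto simp: inj_on_def)
  show ?thesis unfolding lists_n_Suc sum.reindex[OF inj] by (simp add: sum.cartesian_product' split_def)
qed

lemma Omega_Suc_sum: "(\<Sum>\<omega>\<in>Omega W (Suc n). F \<omega>) = (\<Sum>(xs,ys)\<in>Omega W n. \<Sum>x\<in>W. \<Sum>y\<in>W. F (xs@[x], ys@[y]))"
proof -
  have "(\<Sum>\<omega>\<in>Omega W (Suc n). F \<omega>) = (\<Sum>v1\<in>lists_n W (Suc n). \<Sum>v2\<in>lists_n W (Suc n). F (v1, v2))"
    unfolding Omega_def by (rule sum.cartesian_product')
  also have "\<dots> = (\<Sum>u\<in>lists_n W n. \<Sum>x\<in>W. \<Sum>w\<in>lists_n W n. \<Sum>y\<in>W. F (u@[x], w@[y]))"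
    by (simp add: sum_lists_Suc)
  also have "\<dots> = (\<Sum>u\<in>lists_n W n. \<Sum>w\<in>lists_n W n. \<Sum>x\<in>W. \<Sum>y\<in>W. F (u@[x], w@[y]))"
    by (rule sum.cong[OF refl]) (rule sum.swap)
  also have "\<dots> = (\<Sum>(xs,ys)\<in>Omega W n. \<Sum>x\<in>W. \<Sum>y\<in>W. F (xs@[x], ys@[y]))"
    unfolding Omega_def by (rule sum.cartesian_product'[symmetric, where g="\<lambda>(xs,ys). \<Sum>x\<in>W. \<Sum>y\<in>W. F (xs@[x], ys@[y])", simplified])
  finally show ?thesis .
qed

lemma prev_snoc: "prev (xs @ [a]) = (if xs = [] then None else Some (last xs))"
  unfolding prev_def by (cases xs rule: rev_cases) (auto simp: nth_append)

lemma Omega_0: "Omega W 0 = {([], [])}" unfolding Omega_def lists_n_def by auto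


lemma sum_delta2:
  assumes "finite W" "a \<in> W" "b \<in> W"
  shows "(\<Sum>x\<in>W. \<Sum>y\<in>W. if x = a \<and> y = b \<and> P then G x y else 0) = (if P then G a b else 0)"
proof -
  have "(\<Sum>y\<in>W. if x = a \<and> y = b \<and> P then G x y else 0) = (if x = a \<and> P then G x b else 0)" for x
    using assms by (cases "x = a \<and> P") (auto simp: sum.delta)
  then show ?thesis using assms by (simp add: sum.delta)
qed

lemma sum_delta1:
  assumes "finite W" "a \<in> W"
  shows "(\<Sum>x\<in>W. \<Sum>y\<in>W. if x = a \<and> P then G x y else 0) = (if P then (\<Sum>y\<in>W. G a y) else 0)"
proof -
  have "(\<Sum>y\<in>W. if x = a \<and> P then G x y else 0) = (if x = a \<and> P then (\<Sum>y\<in>W. G x y) else 0)" for x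
    by auto
  then show ?thesis using assms by (simp add: sum.delta)
qed

lemma sum_delta_pair:
  assumes "finite A" "(a, b) \<in> A"
  shows "(\<Sum>(x,y)\<in>A. if x = a \<and> y = b then F x y else 0) = F a b"
proof -
  have "(\<Sum>(x,y)\<in>A. if x = a \<and> y = b then F x y else 0) = (\<Sum>p\<in>A. if p = (a,b) then case_prod F p else 0)"
    by (intro sum.cong refl) (simp add: split_def prod_eq_iff)
  then show ?thesis using assms by (simp add: sum.delta)
qed

locale mcq =
  fixes W :: "'a set" and p1 :: "'a \<Rightarrow> real" and Q :: "'a \<Rightarrow> 'a \<Rightarrow> real"
    and q :: "nat \<Rightarrow> 'a list \<Rightarrow> 'a list \<Rightarrow> 'a \<Rightarrow> real"
  assumes finW: "finite W" and mc: "markov_chain W p1 Q" and qH: "q \<in> QH W"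
begin

abbreviation J where "J n \<equiv> joint p1 Q q n"
abbreviation PP where "PP n E \<equiv> Pr (Omega W n) (J n) E"

lemma finL: "finite (lists_n W n)" unfolding lists_n_def using finite_lists_length_eq[OF finW] .
lemma finO: "finite (Omega W n)" unfolding Omega_def using finL by simp

lemma p1_nn: "x \<in> W \<Longrightarrow> p1 x \<ge> 0" using mc unfolding markov_chain_def by auto
lemma p1_sum: "(\<Sum>x\<in>W. p1 x) = 1" using mc unfolding markov_chain_def by auto
lemma Q_nn: "x \<in> W \<Longrightarrow> x' \<in> W \<Longrightarrow> Q x x' \<ge> 0" using mc unfolding markov_chain_def by auto
lemma Q_sum: "x \<in> W \<Longrightarrow> (\<Sum>x'\<in>W. Q x x') = 1" using mc unfolding markov_chain_def by auto

lemma q_nn: "xs \<in> lists_n W (Suc s) \<Longrightarrow> ys \<in> lists_n W s \<Longrightarrow> y \<in> W \<Longrightarrow> q (Suc s) xs ys y \<ge> 0"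
  using qH unfolding QH_def by fastforce
lemma q_sum: "xs \<in> lists_n W (Suc s) \<Longrightarrow> ys \<in> lists_n W s \<Longrightarrow> (\<Sum>y\<in>W. q (Suc s) xs ys y) = 1"
  using qH unfolding QH_def by fastforce

lemma trn_nn: "set xs \<subseteq> W \<Longrightarrow> x \<in> W \<Longrightarrow> trn p1 Q xs x \<ge> 0"
  unfolding trn_def using last_in_set[of xs] by (auto intro!: p1_nn Q_nn)
lemma trn_sum: assumes "set xs \<subseteq> W" shows "(\<Sum>x\<in>W. trn p1 Q xs x) = 1"
proof (cases "xs = []")
  case False
  then have "last xs \<in> W" using assms last_in_set by blast
  then show ?thesis using False unfolding trn_def by (simp add: Q_sum)
qed (simp add: trn_def p1_sum)

lemma in_lists_snoc: "xs @ [x] \<in> lists_n W (Suc n) \<longleftrightarrow> xs \<in> lists_n W n \<and> x \<in> W"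
  unfolding lists_n_def by auto

lemma J_nn: "\<omega> \<in> Omega W n \<Longrightarrow> J n \<omega> \<ge> 0"
proof (induction n arbitrary: \<omega>)
  case 0 then show ?case by (simp add: Omega_0 joint_def)
next
  case (Suc n)
  obtain v1 v2 where w: "\<omega> = (v1, v2)" by fastforce
  with Suc.prems have "v1 \<in> lists_n W (Suc n)" "v2 \<in> lists_n W (Suc n)" unfolding Omega_def by auto
  then obtain xs x ys y where v: "v1 = xs @ [x]" "v2 = ys @ [y]" and m: "xs \<in> lists_n W n" "x \<in> W" "ys \<in> lists_n W n" "y \<in> W"
    unfolding lists_n_Suc by auto
  have l: "length xs = n" "length ys = n" "set xs \<subseteq> W" using m unfolding lists_n_def by auto
  have "J n (xs, ys) \<ge> 0" using Suc.IH m unfolding Omega_def by auto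
  moreover have "trn p1 Q xs x \<ge> 0" using l m by (intro trn_nn)
  moreover have "q (Suc n) (xs @ [x]) ys y \<ge> 0" using m by (intro q_nn) (auto simp: in_lists_snoc)
  ultimately show ?case unfolding w v joint_Suc[OF l(1,2)] by simp
qed

lemma J_last:
  assumes "(xs, ys) \<in> Omega W n"
  shows "(\<Sum>x\<in>W. \<Sum>y\<in>W. J (Suc n) (xs @ [x], ys @ [y])) = J n (xs, ys)"
proof -
  have l: "length xs = n" "length ys = n" "set xs \<subseteq> W" "xs \<in> lists_n W n" "ys \<in> lists_n W n"
    using assms unfolding Omega_def lists_n_def by auto
  have "(\<Sum>x\<in>W. \<Sum>y\<in>W. J (Suc n) (xs @ [x], ys @ [y])) = (\<Sum>x\<in>W. J n (xs, ys) * trn p1 Q xs x * (\<Sum>y\<in>W. q (Suc n) (xs @ [x]) ys y))"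
    unfolding joint_Suc[OF l(1,2)] by (simp add: sum_distrib_left)
  also have "\<dots> = (\<Sum>x\<in>W. J n (xs, ys) * trn p1 Q xs x)"
    by (rule sum.cong[OF refl]) (simp add: q_sum in_lists_snoc l)
  also have "\<dots> = J n (xs, ys)" by (simp add: sum_distrib_left[symmetric] trn_sum l)
  finally show ?thesis .
qed

lemma M0:
  assumes "t \<le> n"
  shows "(\<Sum>(xs,ys)\<in>Omega W n. J n (xs,ys) * f (take t xs) (take t ys)) = (\<Sum>(u,v)\<in>Omega W t. J t (u,v) * f u v)"
  using assms
proof (induction n rule: dec_induct)
  case base
  show ?case by (rule sum.cong[OF refl]) (auto simp: Omega_def lists_n_def)
next
  case (step n)
  have "(\<Sum>(xs,ys)\<in>Omega W (Suc n). J (Suc n) (xs,ys) * f (take t xs) (take t ys))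
     = (\<Sum>(xs,ys)\<in>Omega W n. \<Sum>x\<in>W. \<Sum>y\<in>W. J (Suc n) (xs @ [x], ys @ [y]) * f (take t (xs @ [x])) (take t (ys @ [y])))"
    by (subst Omega_Suc_sum) (simp add: split_def)
  also have "\<dots> = (\<Sum>(xs,ys)\<in>Omega W n. (\<Sum>x\<in>W. \<Sum>y\<in>W. J (Suc n) (xs @ [x], ys @ [y])) * f (take t xs) (take t ys))"
  proof (rule sum.cong[OF refl], clarify)
    fix xs ys assume "(xs, ys) \<in> Omega W n"
    then have "length xs = n" "length ys = n" unfolding Omega_def lists_n_def by auto
    with step.hyps show "(\<Sum>x\<in>W. \<Sum>y\<in>W. J (Suc n) (xs @ [x], ys @ [y]) * f (take t (xs @ [x])) (take t (ys @ [y])))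
       = (\<Sum>x\<in>W. \<Sum>y\<in>W. J (Suc n) (xs @ [x], ys @ [y])) * f (take t xs) (take t ys)"
      by (simp add: sum_distrib_right)
  qed
  also have "\<dots> = (\<Sum>(xs,ys)\<in>Omega W n. J n (xs,ys) * f (take t xs) (take t ys))"
    by (rule sum.cong[OF refl]) (auto simp: J_last)
  finally show ?case using step.IH by simp
qed

lemma PP_prefix:
  assumes "t \<le> n" "\<And>xs ys. (xs, ys) \<in> Omega W n \<Longrightarrow> E (xs, ys) = E' (take t xs, take t ys)"
  shows "PP n E = PP t E'"
proof -
  have "PP n E = (\<Sum>(xs,ys)\<in>Omega W n. J n (xs,ys) * (\<lambda>u v. if E' (u, v) then 1 else 0) (take t xs) (take t ys))"
    unfolding Pr_if[OF finO] by (rule sum.cong[OF refl]) (auto simp: assms(2))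
  also have "\<dots> = (\<Sum>(u,v)\<in>Omega W t. J t (u,v) * (if E' (u, v) then 1 else 0))"
    by (rule M0[OF assms(1)])
  also have "\<dots> = PP t E'" unfolding Pr_if[OF finO] by (rule sum.cong[OF refl]) auto
  finally show ?thesis .
qed

lemma PP_total: "PP n (\<lambda>_. True) = 1"
proof -
  have "PP n (\<lambda>_. True) = PP 0 (\<lambda>_. True)" by (rule PP_prefix) auto
  also have "\<dots> = 1" by (simp add: Omega_0 Pr_def joint_def)
  finally show ?thesis .
qed

lemma PP_single: "\<omega>0 \<in> Omega W n \<Longrightarrow> PP n (\<lambda>\<omega>. \<omega> = \<omega>0) = J n \<omega>0"
  unfolding Pr_if[OF finO] by (simp add: sum.delta finO)

lemma PP_Suc_expand: "PP (Suc s) E = (\<Sum>(xs,ys)\<in>Omega W s. \<Sum>x\<in>W. \<Sum>y\<in>W.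
     if E (xs @ [x], ys @ [y]) then J s (xs,ys) * trn p1 Q xs x * q (Suc s) (xs @ [x]) ys y else 0)"
  unfolding Pr_if[OF finO] Omega_Suc_sum
  by (rule sum.cong[OF refl]) (auto simp: joint_Suc Omega_def lists_n_def intro!: sum.cong)

lemma PP_Suc_xy:
  assumes "a \<in> W" "y0 \<in> W"
    "\<And>xs ys x y. (xs,ys) \<in> Omega W s \<Longrightarrow> x \<in> W \<Longrightarrow> y \<in> W \<Longrightarrow> E (xs @ [x], ys @ [y]) = (x = a \<and> y = y0 \<and> E0 xs ys)"
  shows "PP (Suc s) E = (\<Sum>(xs,ys)\<in>Omega W s. if E0 xs ys then J s (xs,ys) * trn p1 Q xs a * q (Suc s) (xs @ [a]) ys y0 else 0)"
  unfolding PP_Suc_expand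
proof (rule sum.cong[OF refl], clarify)
  fix xs ys assume m: "(xs,ys) \<in> Omega W s"
  have "(\<Sum>x\<in>W. \<Sum>y\<in>W. if E (xs @ [x], ys @ [y]) then J s (xs,ys) * trn p1 Q xs x * q (Suc s) (xs @ [x]) ys y else 0)
     = (\<Sum>x\<in>W. \<Sum>y\<in>W. if x = a \<and> y = y0 \<and> E0 xs ys then J s (xs,ys) * trn p1 Q xs x * q (Suc s) (xs @ [x]) ys y else 0)"
    by (intro sum.cong refl) (simp add: assms(3)[OF m])
  also have "\<dots> = (if E0 xs ys then J s (xs,ys) * trn p1 Q xs a * q (Suc s) (xs @ [a]) ys y0 else 0)"
    by (rule sum_delta2[OF finW assms(1,2)])
  finally show "(\<Sum>x\<in>W. \<Sum>y\<in>W. if E (xs @ [x], ys @ [y]) then J s (xs,ys) * trn p1 Q xs x * q (Suc s) (xs @ [x]) ys y else 0)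
     = (if E0 xs ys then J s (xs,ys) * trn p1 Q xs a * q (Suc s) (xs @ [a]) ys y0 else 0)" .
qed

lemma PP_Suc_x:
  assumes "a \<in> W"
    "\<And>xs ys x y. (xs,ys) \<in> Omega W s \<Longrightarrow> x \<in> W \<Longrightarrow> y \<in> W \<Longrightarrow> E (xs @ [x], ys @ [y]) = (x = a \<and> E0 xs ys)"
  shows "PP (Suc s) E = (\<Sum>(xs,ys)\<in>Omega W s. if E0 xs ys then J s (xs,ys) * trn p1 Q xs a else 0)"
  unfolding PP_Suc_expand
proof (rule sum.cong[OF refl], clarify)
  fix xs ys assume m: "(xs,ys) \<in> Omega W s"
  have l: "xs @ [a] \<in> lists_n W (Suc s)" "ys \<in> lists_n W s" using m assms(1) unfolding Omega_def lists_n_def by auto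
  have "(\<Sum>x\<in>W. \<Sum>y\<in>W. if E (xs @ [x], ys @ [y]) then J s (xs,ys) * trn p1 Q xs x * q (Suc s) (xs @ [x]) ys y else 0)
     = (\<Sum>x\<in>W. \<Sum>y\<in>W. if x = a \<and> E0 xs ys then J s (xs,ys) * trn p1 Q xs x * q (Suc s) (xs @ [x]) ys y else 0)"
    by (intro sum.cong refl) (simp add: assms(2)[OF m])
  also have "\<dots> = (if E0 xs ys then (\<Sum>y\<in>W. J s (xs,ys) * trn p1 Q xs a * q (Suc s) (xs @ [a]) ys y) else 0)"
    by (rule sum_delta1[OF finW assms(1)])
  also have "\<dots> = (if E0 xs ys then J s (xs,ys) * trn p1 Q xs a else 0)"
    by (simp add: sum_distrib_left[symmetric] q_sum[OF l])
  finally show "(\<Sum>x\<in>W. \<Sum>y\<in>W. if E (xs @ [x], ys @ [y]) then J s (xs,ys) * trn p1 Q xs x * q (Suc s) (xs @ [x]) ys y else 0)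
     = (if E0 xs ys then J s (xs,ys) * trn p1 Q xs a else 0)" .
qed

lemma K0:
  assumes "s \<le> n" "u' \<in> lists_n W s" "w \<in> lists_n W s"
  shows "PP n (\<lambda>(xs,ys). take s xs = u' \<and> take s ys = w) = J s (u', w)"
proof -
  have "PP n (\<lambda>(xs,ys). take s xs = u' \<and> take s ys = w) = PP s (\<lambda>\<omega>. \<omega> = (u', w))"
    by (rule PP_prefix[OF assms(1)]) auto
  also have "\<dots> = J s (u', w)" by (rule PP_single) (use assms in \<open>simp add: Omega_def\<close>)
  finally show ?thesis .
qed

lemma K1:
  assumes "Suc s \<le> n" "u' \<in> lists_n W s" "a \<in> W" "w \<in> lists_n W s" "y \<in> W"
  shows "PP n (\<lambda>(xs,ys). take (Suc s) xs = u' @ [a] \<and> ys ! s = y \<and> take s ys = w)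
       = J s (u', w) * trn p1 Q u' a * q (Suc s) (u' @ [a]) w y"
proof -
  have "PP n (\<lambda>(xs,ys). take (Suc s) xs = u' @ [a] \<and> ys ! s = y \<and> take s ys = w)
      = PP (Suc s) (\<lambda>(u1,v1). u1 = u' @ [a] \<and> v1 = w @ [y])"
  proof (rule PP_prefix[OF assms(1)])
    fix xs ys assume "(xs, ys) \<in> Omega W n"
    then have "s < length ys" using assms(1) unfolding Omega_def lists_n_def by auto
    then show "(case (xs, ys) of (xs, ys) \<Rightarrow> take (Suc s) xs = u' @ [a] \<and> ys ! s = y \<and> take s ys = w) =
          (case (take (Suc s) xs, take (Suc s) ys) of (u1, v1) \<Rightarrow> u1 = u' @ [a] \<and> v1 = w @ [y])"
      by (auto simp: take_Suc_conv_app_nth)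
  qed
  also have "\<dots> = (\<Sum>(xs,ys)\<in>Omega W s. if xs = u' \<and> ys = w then J s (xs,ys) * trn p1 Q xs a * q (Suc s) (xs @ [a]) ys y else 0)"
    by (rule PP_Suc_xy[OF assms(3,5)]) auto
  also have "\<dots> = J s (u', w) * trn p1 Q u' a * q (Suc s) (u' @ [a]) w y"
    by (rule sum_delta_pair[OF finO]) (use assms in \<open>simp add: Omega_def\<close>)
  finally show ?thesis .
qed

lemma K2:
  assumes "Suc s \<le> n" "u' \<in> lists_n W s" "a \<in> W" "w \<in> lists_n W s"
  shows "PP n (\<lambda>(xs,ys). take (Suc s) xs = u' @ [a] \<and> take s ys = w) = J s (u', w) * trn p1 Q u' a"
proof -
  have "PP n (\<lambda>(xs,ys). take (Suc s) xs = u' @ [a] \<and> take s ys = w)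
      = PP (Suc s) (\<lambda>(u1,v1). u1 = u' @ [a] \<and> take s v1 = w)"
    by (rule PP_prefix[OF assms(1)]) (auto simp: min_def)
  also have "\<dots> = (\<Sum>(xs,ys)\<in>Omega W s. if xs = u' \<and> ys = w then J s (xs,ys) * trn p1 Q xs a else 0)"
    by (rule PP_Suc_x[OF assms(3)]) (auto simp: Omega_def lists_n_def)
  also have "\<dots> = J s (u', w) * trn p1 Q u' a"
    by (rule sum_delta_pair[OF finO]) (use assms in \<open>simp add: Omega_def\<close>)
  finally show ?thesis .
qed

lemma K3:
  assumes "Suc s \<le> n" "a \<in> W"
  shows "PP n (\<lambda>(xs,ys). take (Suc s) xs = u' @ [a]) = PP n (\<lambda>(xs,ys). take s xs = u') * trn p1 Q u' a"
proof -
  have "PP n (\<lambda>(xs,ys). take (Suc s) xs = u' @ [a]) = PP (Suc s) (\<lambda>(u1,v1). u1 = u' @ [a])"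
    by (rule PP_prefix[OF assms(1)]) auto
  also have "\<dots> = (\<Sum>(xs,ys)\<in>Omega W s. if xs = u' then J s (xs,ys) * trn p1 Q xs a else 0)"
    by (rule PP_Suc_x[OF assms(2)]) auto
  also have "\<dots> = (\<Sum>(xs,ys)\<in>Omega W s. if xs = u' then J s (xs,ys) else 0) * trn p1 Q u' a"
    unfolding sum_distrib_right by (rule sum.cong[OF refl]) auto
  also have "(\<Sum>(xs,ys)\<in>Omega W s. if xs = u' then J s (xs,ys) else 0) = PP s (\<lambda>(xs,ys). xs = u')"
    unfolding Pr_if[OF finO] by (rule sum.cong[OF refl]) auto
  also have "PP s (\<lambda>(xs,ys). xs = u') = PP n (\<lambda>(xs,ys). take s xs = u')"
    by (rule PP_prefix[symmetric]) (use assms in auto)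
  finally show ?thesis .
qed

end

lemma kappa_lemma:
  assumes fin: "finite S"
    and hyp: "\<And>a b c. a \<in> A ` S \<Longrightarrow> b \<in> B ` S \<Longrightarrow> c \<in> C ` S \<Longrightarrow>
        Pr S pm (\<lambda>w. A w = a \<and> B w = b \<and> C w = c) = Pr S pm (\<lambda>w. A w = a \<and> C w = c) * \<kappa> (f a) b c"
    and b: "b \<in> B ` S" and c: "c \<in> C ` S"
  shows "Pr S pm (\<lambda>w. f (A w) = \<alpha> \<and> B w = b \<and> C w = c) = Pr S pm (\<lambda>w. f (A w) = \<alpha> \<and> C w = c) * \<kappa> \<alpha> b c"
proof -
  have "Pr S pm (\<lambda>w. f (A w) = \<alpha> \<and> B w = b \<and> C w = c) = (\<Sum>a\<in>A ` S. Pr S pm (\<lambda>w. (f (A w) = \<alpha> \<and> B w = b \<and> C w = c) \<and> A w = a))"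
    by (rule Pr_partition[OF fin, symmetric])
  also have "\<dots> = (\<Sum>a\<in>A ` S. (if f a = \<alpha> then Pr S pm (\<lambda>w. A w = a \<and> C w = c) else 0) * \<kappa> \<alpha> b c)"
  proof (rule sum.cong[OF refl])
    fix a assume a: "a \<in> A ` S"
    show "Pr S pm (\<lambda>w. (f (A w) = \<alpha> \<and> B w = b \<and> C w = c) \<and> A w = a) = (if f a = \<alpha> then Pr S pm (\<lambda>w. A w = a \<and> C w = c) else 0) * \<kappa> \<alpha> b c"
    proof (cases "f a = \<alpha>")
      case True
      have "Pr S pm (\<lambda>w. (f (A w) = \<alpha> \<and> B w = b \<and> C w = c) \<and> A w = a) = Pr S pm (\<lambda>w. A w = a \<and> B w = b \<and> C w = c)"
        by (rule Pr_cong) (use True in auto)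
      then show ?thesis using hyp[OF a b c] True by simp
    next
      case False
      then show ?thesis by (simp, intro Pr_false) auto
    qed
  qed
  also have "\<dots> = (\<Sum>a\<in>A ` S. Pr S pm (\<lambda>w. (f (A w) = \<alpha> \<and> C w = c) \<and> A w = a)) * \<kappa> \<alpha> b c"
    unfolding sum_distrib_right
  proof (rule sum.cong[OF refl])
    fix a assume a: "a \<in> A ` S"
    show "(if f a = \<alpha> then Pr S pm (\<lambda>w. A w = a \<and> C w = c) else 0) * \<kappa> \<alpha> b c = Pr S pm (\<lambda>w. (f (A w) = \<alpha> \<and> C w = c) \<and> A w = a) * \<kappa> \<alpha> b c"
    proof (cases "f a = \<alpha>")
      case True
      have "Pr S pm (\<lambda>w. (f (A w) = \<alpha> \<and> C w = c) \<and> A w = a) = Pr S pm (\<lambda>w. A w = a \<and> C w = c)"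
        by (rule Pr_cong) (use True in auto)
      then show ?thesis using True by simp
    next
      case False
      have "Pr S pm (\<lambda>w. (f (A w) = \<alpha> \<and> C w = c) \<and> A w = a) = 0" by (rule Pr_false) (use False in auto)
      then show ?thesis using False by simp
    qed
  qed
  also have "(\<Sum>a\<in>A ` S. Pr S pm (\<lambda>w. (f (A w) = \<alpha> \<and> C w = c) \<and> A w = a)) = Pr S pm (\<lambda>w. f (A w) = \<alpha> \<and> C w = c)"
    by (rule Pr_partition[OF fin])
  finally show ?thesis .
qed

lemma cmi_kappa:
  assumes fin: "finite S" and nn: "\<And>w. w \<in> S \<Longrightarrow> pm w \<ge> 0"
    and hyp: "\<And>a b c. a \<in> A ` S \<Longrightarrow> b \<in> B ` S \<Longrightarrow> c \<in> C ` S \<Longrightarrow>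
        Pr S pm (\<lambda>w. A w = a \<and> B w = b \<and> C w = c) = Pr S pm (\<lambda>w. A w = a \<and> C w = c) * \<kappa> (f a) b c"
  shows "cmi S pm (\<lambda>w. f (A w)) B C = cmi S pm A B C"
proof -
  have "(\<Sum>w\<in>S. pm w * cmiL S pm (\<lambda>w. f (A w)) B C w) = (\<Sum>w\<in>S. pm w * cmiL S pm A B C w)"
  proof (rule sum.cong[OF refl])
  fix w assume w: "w \<in> S"
  show "pm w * cmiL S pm (\<lambda>w. f (A w)) B C w = pm w * cmiL S pm A B C w"
  proof (cases "pm w > 0")
    case False then have "pm w = 0" using nn[OF w] by simp
    then show ?thesis by simp
  next
    case True
    let ?k = "\<kappa> (f (A w)) (B w) (C w)"
    have h1: "Pr S pm (\<lambda>w'. A w' = A w \<and> B w' = B w \<and> C w' = C w) = Pr S pm (\<lambda>w'. A w' = A w \<and> C w' = C w) * ?k"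
      using hyp w by blast
    have h2: "Pr S pm (\<lambda>w'. f (A w') = f (A w) \<and> B w' = B w \<and> C w' = C w) = Pr S pm (\<lambda>w'. f (A w') = f (A w) \<and> C w' = C w) * ?k"
      by (rule kappa_lemma[where A=A and B=B and C=C and f=f and \<kappa>=\<kappa> and pm=pm, OF fin hyp]) (use w in auto)
    have p1: "Pr S pm (\<lambda>w'. A w' = A w \<and> C w' = C w) > 0" using Pr_pos[where S=S and pm=pm, OF fin nn w True] by simp
    have p2: "Pr S pm (\<lambda>w'. f (A w') = f (A w) \<and> C w' = C w) > 0" using Pr_pos[where S=S and pm=pm, OF fin nn w True] by simp
    show ?thesis unfolding cmiL_def h1 h2 using p1 p2 by simp
  qed
  qed
  then show ?thesis by (simp only: cmi_pointwise[OF fin nn])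
qed

lemma ln_aux:
  fixes pabc pc pac pbc qabc qac :: real
  assumes "pabc > 0" "pc > 0" "pac > 0" "pbc > 0" "qabc > 0" "qac > 0"
  shows "ln (qabc * pc / (qac * pbc)) \<le> ln (pabc * pc / (pac * pbc)) - 1 + pac * qabc / (qac * pabc)"
proof -
  define x where "x = pac * qabc / (qac * pabc)"
  have x: "x > 0" unfolding x_def using assms by simp
  have "qabc * pc / (qac * pbc) = (pabc * pc / (pac * pbc)) * x" unfolding x_def using assms by (simp add: field_simps)
  moreover have "ln ((pabc * pc / (pac * pbc)) * x) = ln (pabc * pc / (pac * pbc)) + ln x"
    by (rule ln_mult_pos) (use x assms in simp_all)
  ultimately have "ln (qabc * pc / (qac * pbc)) = ln (pabc * pc / (pac * pbc)) + ln x" by simp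
  moreover have "ln x \<le> x - 1" using ln_le_minus_one[OF x] .
  ultimately show ?thesis unfolding x_def by simp
qed

lemma cmi_dp:
  assumes fin: "finite S" and nn: "\<And>w. w \<in> S \<Longrightarrow> pm w \<ge> 0"
  shows "cmi S pm (\<lambda>w. f (A w)) B C \<le> cmi S pm A B C"
proof -
  define h where "h = (\<lambda>(a,b,c). Pr S pm (\<lambda>w. A w = a \<and> C w = c) * Pr S pm (\<lambda>w. f (A w) = f a \<and> B w = b \<and> C w = c) / Pr S pm (\<lambda>w. f (A w) = f a \<and> C w = c))"
  define K where "K w = (A w, B w, C w)" for w
  define r where "r w = h (K w) / Pr S pm (\<lambda>w'. K w' = K w)" for w
  have PrN: "Pr S pm E \<ge> 0" for E by (rule Pr_nonneg[OF nn])
  have hN: "h z \<ge> 0" for z unfolding h_def by (auto simp: PrN split: prod.splits)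
  have step1: "pm w * cmiL S pm (\<lambda>w. f (A w)) B C w \<le> pm w * cmiL S pm A B C w - pm w + pm w * r w" if w: "w \<in> S" for w
  proof (cases "pm w > 0")
    case False then have "pm w = 0" using nn[OF w] by simp
    then show ?thesis by simp
  next
    case True
    note pp = Pr_pos[where S=S and pm=pm, OF fin nn w True]
    have eqK: "Pr S pm (\<lambda>w'. K w' = K w) = Pr S pm (\<lambda>w'. A w' = A w \<and> B w' = B w \<and> C w' = C w)"
      by (rule Pr_cong) (simp add: K_def)
    have rw: "r w = Pr S pm (\<lambda>w'. A w' = A w \<and> C w' = C w) * Pr S pm (\<lambda>w'. f (A w') = f (A w) \<and> B w' = B w \<and> C w' = C w)
        / (Pr S pm (\<lambda>w'. f (A w') = f (A w) \<and> C w' = C w) * Pr S pm (\<lambda>w'. A w' = A w \<and> B w' = B w \<and> C w' = C w))"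
      unfolding r_def eqK unfolding h_def K_def by simp
    have "cmiL S pm (\<lambda>w. f (A w)) B C w \<le> cmiL S pm A B C w - 1 + r w"
      unfolding cmiL_def rw by (rule ln_aux) (use pp in simp_all)
    then have "pm w * cmiL S pm (\<lambda>w. f (A w)) B C w \<le> pm w * (cmiL S pm A B C w - 1 + r w)"
      by (rule mult_left_mono) (use True in simp)
    then show ?thesis by (simp add: algebra_simps)
  qed
  have step2: "(\<Sum>w\<in>S. pm w * r w) = (\<Sum>z\<in>K ` S. Pr S pm (\<lambda>w. K w = z) * (h z / Pr S pm (\<lambda>w. K w = z)))"
  proof -
    have "(\<Sum>z\<in>K ` S. Pr S pm (\<lambda>w. K w = z) * (h z / Pr S pm (\<lambda>w. K w = z))) = (\<Sum>w\<in>S. pm w * (h (K w) / Pr S pm (\<lambda>w'. K w' = K w)))"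
      by (rule sum_Pr_group) (auto simp: fin)
    then show ?thesis by (simp add: r_def)
  qed
  have step3: "\<dots> \<le> (\<Sum>z\<in>K ` S. h z)"
  proof (rule sum_mono)
    fix z show "Pr S pm (\<lambda>w. K w = z) * (h z / Pr S pm (\<lambda>w. K w = z)) \<le> h z"
      using hN[of z] by (cases "Pr S pm (\<lambda>w. K w = z) = 0") auto
  qed
  have step4: "(\<Sum>z\<in>K ` S. h z) \<le> (\<Sum>z\<in>A ` S \<times> B ` S \<times> C ` S. h z)"
    by (rule sum_mono2) (auto simp: fin hN K_def)
  have step5: "(\<Sum>z\<in>A ` S \<times> B ` S \<times> C ` S. h z) = (\<Sum>a\<in>A ` S. \<Sum>c\<in>C ` S. \<Sum>b\<in>B ` S. h (a,b,c))"
  proof -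
    have "(\<Sum>z\<in>A ` S \<times> B ` S \<times> C ` S. h z) = (\<Sum>a\<in>A ` S. \<Sum>bc\<in>B ` S \<times> C ` S. h (a,bc))"
      by (rule sum.cartesian_product')
    also have "\<dots> = (\<Sum>a\<in>A ` S. \<Sum>b\<in>B ` S. \<Sum>c\<in>C ` S. h (a,b,c))"
      by (simp add: sum.cartesian_product')
    also have "\<dots> = (\<Sum>a\<in>A ` S. \<Sum>c\<in>C ` S. \<Sum>b\<in>B ` S. h (a,b,c))"
      by (rule sum.cong[OF refl], rule sum.swap)
    finally show ?thesis .
  qed
  have step6: "(\<Sum>b\<in>B ` S. h (a,b,c)) = Pr S pm (\<lambda>w. A w = a \<and> C w = c)" for a c
  proof -
    have "(\<Sum>b\<in>B ` S. Pr S pm (\<lambda>w. f (A w) = f a \<and> B w = b \<and> C w = c)) = (\<Sum>b\<in>B ` S. Pr S pm (\<lambda>w. (f (A w) = f a \<and> C w = c) \<and> B w = b))"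
      by (intro sum.cong refl Pr_cong) auto
    also have "\<dots> = Pr S pm (\<lambda>w. f (A w) = f a \<and> C w = c)" by (rule Pr_partition[OF fin])
    finally have e: "(\<Sum>b\<in>B ` S. Pr S pm (\<lambda>w. f (A w) = f a \<and> B w = b \<and> C w = c)) = Pr S pm (\<lambda>w. f (A w) = f a \<and> C w = c)" .
    have le: "Pr S pm (\<lambda>w. A w = a \<and> C w = c) \<le> Pr S pm (\<lambda>w. f (A w) = f a \<and> C w = c)"
      by (rule Pr_mono[OF fin nn]) auto
    have "(\<Sum>b\<in>B ` S. h (a,b,c)) = Pr S pm (\<lambda>w. A w = a \<and> C w = c) * (\<Sum>b\<in>B ` S. Pr S pm (\<lambda>w. f (A w) = f a \<and> B w = b \<and> C w = c)) / Pr S pm (\<lambda>w. f (A w) = f a \<and> C w = c)"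
      unfolding h_def by (simp add: sum_divide_distrib sum_distrib_left)
    also have "\<dots> = Pr S pm (\<lambda>w. A w = a \<and> C w = c)"
      unfolding e using le PrN[of "\<lambda>w. A w = a \<and> C w = c"] by (cases "Pr S pm (\<lambda>w. f (A w) = f a \<and> C w = c) = 0") auto
    finally show ?thesis .
  qed
  have step7: "(\<Sum>a\<in>A ` S. \<Sum>c\<in>C ` S. Pr S pm (\<lambda>w. A w = a \<and> C w = c)) = (\<Sum>w\<in>S. pm w)"
  proof -
    have "(\<Sum>a\<in>A ` S. \<Sum>c\<in>C ` S. Pr S pm (\<lambda>w. A w = a \<and> C w = c)) = (\<Sum>a\<in>A ` S. Pr S pm (\<lambda>w. A w = a))"
      by (intro sum.cong refl Pr_partition[OF fin])
    also have "\<dots> = Pr S pm (\<lambda>_. True)" using Pr_partition[OF fin, where B=A and pm=pm and E="\<lambda>_. True"] by simp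
    also have "\<dots> = (\<Sum>w\<in>S. pm w)" unfolding Pr_def by simp
    finally show ?thesis .
  qed
  have sumr: "(\<Sum>w\<in>S. pm w * r w) \<le> (\<Sum>w\<in>S. pm w)"
    using step2 step3 step4 step5 step6 step7 by simp
  have "cmi S pm (\<lambda>w. f (A w)) B C = (\<Sum>w\<in>S. pm w * cmiL S pm (\<lambda>w. f (A w)) B C w)" by (rule cmi_pointwise[OF fin nn])
  also have "\<dots> \<le> (\<Sum>w\<in>S. pm w * cmiL S pm A B C w - pm w + pm w * r w)" by (rule sum_mono) (rule step1)
  also have "\<dots> = (\<Sum>w\<in>S. pm w * cmiL S pm A B C w) - (\<Sum>w\<in>S. pm w) + (\<Sum>w\<in>S. pm w * r w)"
    by (simp add: sum.distrib sum_subtractf)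
  also have "\<dots> \<le> (\<Sum>w\<in>S. pm w * cmiL S pm A B C w)" using sumr by simp
  also have "\<dots> = cmi S pm A B C" by (rule cmi_pointwise[OF fin nn, symmetric])
  finally show ?thesis .
qed

lemma last_take_Suc: "s < length xs \<Longrightarrow> last (take (Suc s) xs) = xs ! s"
  by (simp add: take_Suc_conv_app_nth)

context mcq begin

definition gf where "gf t a b v = PP t (\<lambda>(u1,v1). last u1 = a \<and> prev u1 = b \<and> v1 = v)"
definition Hf where "Hf s a b w = (\<Sum>(xs,ys)\<in>Omega W s. if prev (xs @ [a]) = b \<and> ys = w then J s (xs,ys) * trn p1 Q xs a else 0)"

lemma gf_nn: "gf t a b v \<ge> 0" unfolding gf_def by (rule Pr_nonneg) (rule J_nn)

lemma g_Suc:
  assumes "a \<in> W" "y \<in> W"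
  shows "gf (Suc s) a b (w @ [y]) = (\<Sum>(xs,ys)\<in>Omega W s. if prev (xs @ [a]) = b \<and> ys = w then J s (xs,ys) * trn p1 Q xs a * q (Suc s) (xs @ [a]) ys y else 0)"
  unfolding gf_def by (rule PP_Suc_xy[OF assms]) auto

lemma g_sum:
  assumes "a \<in> W"
  shows "(\<Sum>y\<in>W. gf (Suc s) a b (w @ [y])) = Hf s a b w"
proof -
  have "(\<Sum>y\<in>W. gf (Suc s) a b (w @ [y])) = (\<Sum>y\<in>W. \<Sum>(xs,ys)\<in>Omega W s. if prev (xs @ [a]) = b \<and> ys = w then J s (xs,ys) * trn p1 Q xs a * q (Suc s) (xs @ [a]) ys y else 0)"
    by (rule sum.cong[OF refl]) (simp add: g_Suc assms)
  also have "\<dots> = (\<Sum>(xs,ys)\<in>Omega W s. \<Sum>y\<in>W. if prev (xs @ [a]) = b \<and> ys = w then J s (xs,ys) * trn p1 Q xs a * q (Suc s) (xs @ [a]) ys y else 0)"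
    unfolding split_def by (rule sum.swap)
  also have "\<dots> = Hf s a b w" unfolding Hf_def
  proof (rule sum.cong[OF refl], clarify)
    fix xs ys assume m: "(xs, ys) \<in> Omega W s"
    have l: "xs @ [a] \<in> lists_n W (Suc s)" "ys \<in> lists_n W s" using m assms unfolding Omega_def lists_n_def by auto
    show "(\<Sum>y\<in>W. if prev (xs @ [a]) = b \<and> ys = w then J s (xs,ys) * trn p1 Q xs a * q (Suc s) (xs @ [a]) ys y else 0)
        = (if prev (xs @ [a]) = b \<and> ys = w then J s (xs,ys) * trn p1 Q xs a else 0)"
    proof (cases "prev (xs @ [a]) = b \<and> ys = w")
      case True
      have "(\<Sum>y\<in>W. J s (xs,ys) * trn p1 Q xs a * q (Suc s) (xs @ [a]) ys y) = J s (xs,ys) * trn p1 Q xs a"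
        by (simp add: sum_distrib_left[symmetric] q_sum[OF l])
      then show ?thesis by (simp only: if_P[OF True])
    next
      case False
      show ?thesis by (simp only: if_not_P[OF False] sum.neutral_const)
    qed
  qed
  finally show ?thesis .
qed

lemma g_zero:
  assumes "\<not> (a \<in> W \<and> v \<in> lists_n W (Suc s))"
  shows "gf (Suc s) a b v = 0"
  unfolding gf_def
proof (rule Pr_false)
  fix \<omega> assume m: "\<omega> \<in> Omega W (Suc s)"
  obtain u1 v1 where om: "\<omega> = (u1, v1)" by fastforce
  have u: "u1 \<noteq> []" "set u1 \<subseteq> W" "v1 \<in> lists_n W (Suc s)" using m om unfolding Omega_def lists_n_def by auto
  then have "last u1 \<in> W" using last_in_set[of u1] by blast
  then show "\<not> (case \<omega> of (u1, v1) \<Rightarrow> last u1 = a \<and> prev u1 = b \<and> v1 = v)" using assms u om by auto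
qed

lemma H0: "Hf 0 a b w = (if b = None \<and> w = [] then p1 a else 0)"
  unfolding Hf_def Omega_0 by (simp add: prev_snoc joint_def trn_def)

lemma H_Suc: "Hf (Suc r) a b w = (case b of None \<Rightarrow> 0 | Some c \<Rightarrow> Q c a * (\<Sum>b'\<in>(\<lambda>(xs,ys). prev xs) ` Omega W (Suc r). gf (Suc r) c b' w))"
proof (cases b)
  case None
  show ?thesis unfolding Hf_def None
  proof (simp, rule sum.neutral, clarify)
    fix xs ys assume "(xs, ys) \<in> Omega W (Suc r)"
    then have "xs \<noteq> []" unfolding Omega_def lists_n_def by auto
    then show "(if prev (xs @ [a]) = None \<and> ys = w then J (Suc r) (xs, ys) * trn p1 Q xs a else 0) = 0"
      by (simp add: prev_snoc)
  qed
next
  case (Some c)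
  have e1: "Hf (Suc r) a (Some c) w = (\<Sum>(xs,ys)\<in>Omega W (Suc r). if last xs = c \<and> ys = w then J (Suc r) (xs,ys) else 0) * Q c a"
    unfolding Hf_def sum_distrib_right
  proof (rule sum.cong[OF refl], clarify)
    fix xs ys assume "(xs, ys) \<in> Omega W (Suc r)"
    then have "xs \<noteq> []" unfolding Omega_def lists_n_def by auto
    then show "(if prev (xs @ [a]) = Some c \<and> ys = w then J (Suc r) (xs, ys) * trn p1 Q xs a else 0) =
         (if last xs = c \<and> ys = w then J (Suc r) (xs, ys) else 0) * Q c a"
      by (simp add: prev_snoc trn_def)
  qed
  have e2: "(\<Sum>(xs,ys)\<in>Omega W (Suc r). if last xs = c \<and> ys = w then J (Suc r) (xs,ys) else 0) = PP (Suc r) (\<lambda>(xs,ys). last xs = c \<and> ys = w)"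
    unfolding Pr_if[OF finO] apply (rule sum.cong[OF refl]) apply (rename_tac x, case_tac x) apply simp done
  have e3: "PP (Suc r) (\<lambda>(xs,ys). last xs = c \<and> ys = w) = (\<Sum>b'\<in>(\<lambda>(xs,ys). prev xs) ` Omega W (Suc r). gf (Suc r) c b' w)"
  proof -
    have "(\<Sum>b'\<in>(\<lambda>(xs,ys). prev xs) ` Omega W (Suc r). PP (Suc r) (\<lambda>\<omega>. (case \<omega> of (xs,ys) \<Rightarrow> last xs = c \<and> ys = w) \<and> (case \<omega> of (xs,ys) \<Rightarrow> prev xs) = b'))
        = PP (Suc r) (\<lambda>(xs,ys). last xs = c \<and> ys = w)"
      by (rule Pr_partition[OF finO])
    moreover have "PP (Suc r) (\<lambda>\<omega>. (case \<omega> of (xs,ys) \<Rightarrow> last xs = c \<and> ys = w) \<and> (case \<omega> of (xs,ys) \<Rightarrow> prev xs) = b') = gf (Suc r) c b' w" for b'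
      unfolding gf_def by (rule Pr_cong) auto
    ultimately show ?thesis by simp
  qed
  show ?thesis using e1 e2 e3 Some by simp
qed

definition qsH where "qsH t a b w y = (let den = \<Sum>y'\<in>W. gf t a b (w @ [y']) in if den > 0 then gf t a b (w @ [y]) / den else 1 / real (card W))"
definition qN where "qN = (\<lambda>t xs ys y. qsH t (last xs) (prev xs) ys y)"

lemma qsH_nn: "qsH t a b w y \<ge> 0"
  unfolding qsH_def Let_def using gf_nn by (auto intro!: divide_nonneg_pos)

lemma qsH_sum: assumes "W \<noteq> {}" shows "(\<Sum>y\<in>W. qsH t a b w y) = 1"
proof (cases "(\<Sum>y'\<in>W. gf t a b (w @ [y'])) > 0")
  case True
  then show ?thesis unfolding qsH_def Let_def by (simp add: sum_divide_distrib[symmetric])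
next
  case False
  have "card W > 0" using assms finW by (simp add: card_gt_0_iff)
  then show ?thesis using False unfolding qsH_def Let_def by simp
qed

lemma qN_QH: "qN \<in> QH W"
  unfolding QH_def
proof (clarify, intro conjI ballI)
  fix t xs ys y assume "1 \<le> t" "xs \<in> lists_n W t"
  show "0 \<le> qN t xs ys y" unfolding qN_def by (rule qsH_nn)
next
  fix t xs ys assume t: "1 \<le> t" and xs: "xs \<in> lists_n W t"
  have "W \<noteq> {}" using t xs unfolding lists_n_def by (cases xs) auto
  then show "(\<Sum>y\<in>W. qN t xs ys y) = 1" unfolding qN_def by (rule qsH_sum)
qed

lemma qN_QS: "qN \<in> QS W"
  unfolding QS_def using qN_QH by (auto simp: qN_def)

lemma qN_mcq: "mcq W p1 Q qN" by (rule mcq.intro[OF finW mc qN_QH])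

lemma K_kappa:
  assumes "Suc s \<le> n" "u \<in> lists_n W (Suc s)" "y \<in> W" "w \<in> lists_n W s"
  shows "PP n (\<lambda>(xs,ys). take (Suc s) xs = u \<and> ys ! s = y \<and> take s ys = w) = PP n (\<lambda>(xs,ys). take (Suc s) xs = u \<and> take s ys = w) * q (Suc s) u w y"
proof -
  obtain u' a where u: "u = u' @ [a]" "u' \<in> lists_n W s" "a \<in> W" using assms(2) unfolding lists_n_Suc by auto
  show ?thesis unfolding u(1) K1[OF assms(1) u(2,3) assms(4,3)] K2[OF assms(1) u(2,3) assms(4)] ..
qed

lemma g_eq: "mcq.gf W p1 Q qN (Suc s) a b v = gf (Suc s) a b v"
proof -
  interpret N: mcq W p1 Q qN by (rule qN_mcq)
  have main: "N.gf (Suc s) a b v = gf (Suc s) a b v" if HE: "\<And>a b w. N.Hf s a b w = Hf s a b w" for s a b v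
  proof (cases "a \<in> W \<and> v \<in> lists_n W (Suc s)")
    case False then show ?thesis by (simp add: N.g_zero g_zero)
  next
    case True
    then obtain w y where v: "v = w @ [y]" "w \<in> lists_n W s" "y \<in> W" and a: "a \<in> W" unfolding lists_n_Suc by auto
    have "N.gf (Suc s) a b (w @ [y]) = (\<Sum>(xs,ys)\<in>Omega W s. if prev (xs @ [a]) = b \<and> ys = w then N.J s (xs,ys) * trn p1 Q xs a * qN (Suc s) (xs @ [a]) ys y else 0)"
      by (rule N.g_Suc[OF a v(3)])
    also have "\<dots> = N.Hf s a b w * qsH (Suc s) a b w y"
      unfolding N.Hf_def sum_distrib_right
    proof (rule sum.cong[OF refl], clarify)
      fix xs ys
      show "(if prev (xs @ [a]) = b \<and> ys = w then N.J s (xs,ys) * trn p1 Q xs a * qN (Suc s) (xs @ [a]) ys y else 0)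
         = (if prev (xs @ [a]) = b \<and> ys = w then N.J s (xs,ys) * trn p1 Q xs a else 0) * qsH (Suc s) a b w y"
        by (cases "prev (xs @ [a]) = b \<and> ys = w") (auto simp: qN_def)
    qed
    also have "\<dots> = Hf s a b w * qsH (Suc s) a b w y" by (simp add: HE)
    also have "\<dots> = gf (Suc s) a b (w @ [y])"
    proof -
      let ?den = "\<Sum>y'\<in>W. gf (Suc s) a b (w @ [y'])"
      have den: "?den = Hf s a b w" by (rule g_sum[OF a])
      show ?thesis
      proof (cases "?den > 0")
        case True then show ?thesis unfolding qsH_def Let_def den[symmetric] by simp
      next
        case False
        have "?den \<ge> 0" by (rule sum_nonneg) (rule gf_nn)
        with False have d0: "?den = 0" by simp
        have "gf (Suc s) a b (w @ [y]) \<le> ?den" by (rule member_le_sum) (use v gf_nn finW in auto)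
        then have "gf (Suc s) a b (w @ [y]) = 0" using d0 gf_nn[of "Suc s" a b "w @ [y]"] by simp
        then show ?thesis using d0 den by simp
      qed
    qed
    finally show ?thesis using v by simp
  qed
  have "\<forall>a b v. N.gf (Suc s) a b v = gf (Suc s) a b v"
  proof (induction s)
    case 0
    have HE: "N.Hf 0 a b w = Hf 0 a b w" for a b w by (simp add: N.H0 H0)
    show ?case using main[OF HE] by blast
  next
    case (Suc r)
    have HE: "N.Hf (Suc r) a b w = Hf (Suc r) a b w" for a b w
      using Suc.IH by (simp add: N.H_Suc H_Suc split: option.splits)
    show ?case using main[OF HE] by blast
  qed
  then show ?thesis by blast
qed

end

definition Gt :: "nat \<Rightarrow> 'a list \<times> 'a list \<Rightarrow> 'a \<times> 'a option \<times> 'a list" where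
  "Gt s = (\<lambda>(xs,ys). (xs ! s, prev (take (Suc s) xs), take (Suc s) ys))"

context mcq begin

lemma G_dist:
  assumes "Suc s \<le> n"
  shows "Pr (Omega W n) (joint p1 Q qN n) (\<lambda>\<omega>. Gt s \<omega> = z) = PP n (\<lambda>\<omega>. Gt s \<omega> = z)"
proof -
  interpret N: mcq W p1 Q qN by (rule qN_mcq)
  obtain a b v where z: "z = (a, b, v)" by (cases z) auto
  have ev: "(\<lambda>\<omega>. Gt s \<omega> = z) (xs, ys) = (\<lambda>(u1,v1). last u1 = a \<and> prev u1 = b \<and> v1 = v) (take (Suc s) xs, take (Suc s) ys)"
    if "(xs, ys) \<in> Omega W n" for xs ys
  proof -
    have "s < length xs" using that assms unfolding Omega_def lists_n_def by auto
    then show ?thesis unfolding Gt_def z by (simp add: last_take_Suc)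
  qed
  have "N.PP n (\<lambda>\<omega>. Gt s \<omega> = z) = N.gf (Suc s) a b v" unfolding N.gf_def by (rule N.PP_prefix[where E="\<lambda>\<omega>. Gt s \<omega> = z" and E'="\<lambda>(u1,v1). last u1 = a \<and> prev u1 = b \<and> v1 = v", OF assms ev])
  also have "\<dots> = gf (Suc s) a b v" by (rule g_eq)
  also have "\<dots> = PP n (\<lambda>\<omega>. Gt s \<omega> = z)" unfolding gf_def by (rule PP_prefix[where E="\<lambda>\<omega>. Gt s \<omega> = z" and E'="\<lambda>(u1,v1). last u1 = a \<and> prev u1 = b \<and> v1 = v", OF assms ev, symmetric])
  finally show ?thesis .
qed

lemma imgs:
  assumes "Suc s \<le> n" "(xs, ys) \<in> Omega W n"
  shows "take (Suc s) xs \<in> lists_n W (Suc s)" "ys ! s \<in> W" "take s ys \<in> lists_n W s"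
  using assms unfolding Omega_def lists_n_def by (auto dest: in_set_takeD)

lemma leak_term_le:
  assumes "Suc s \<le> n"
  shows "cmi (Omega W n) (joint p1 Q qN n) (\<lambda>(xs, ys). take (Suc s) xs) (\<lambda>(xs, ys). ys ! s) (\<lambda>(xs, ys). take s ys)
      \<le> cmi (Omega W n) (J n) (\<lambda>(xs, ys). take (Suc s) xs) (\<lambda>(xs, ys). ys ! s) (\<lambda>(xs, ys). take s ys)"
proof -
  interpret N: mcq W p1 Q qN by (rule qN_mcq)
  let ?S = "Omega W n"
  let ?A = "\<lambda>(xs, ys). take (Suc s) xs" and ?B = "\<lambda>(xs, ys). ys ! s" and ?C = "\<lambda>(xs, ys). take s ys"
  let ?A2 = "\<lambda>(xs, ys). (xs ! s, prev (take (Suc s) xs))"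
  define fl where "fl u = (last u, prev u)" for u :: "'a list"
  have a: "cmi ?S (N.J n) (\<lambda>\<omega>. fl (?A \<omega>)) ?B ?C = cmi ?S (N.J n) ?A ?B ?C"
  proof (rule cmi_kappa[OF N.finO N.J_nn, where \<kappa>="\<lambda>(a,b) y w. qsH (Suc s) a b w y"])
    fix u y w assume u: "u \<in> ?A ` ?S" and y: "y \<in> ?B ` ?S" and w: "w \<in> ?C ` ?S"
    have u': "u \<in> lists_n W (Suc s)" using u imgs[OF assms] by auto
    have y': "y \<in> W" using y imgs[OF assms] by auto
    have w': "w \<in> lists_n W s" using w imgs[OF assms] by auto
    have "N.PP n (\<lambda>\<omega>. ?A \<omega> = u \<and> ?B \<omega> = y \<and> ?C \<omega> = w) = N.PP n (\<lambda>(xs,ys). take (Suc s) xs = u \<and> ys ! s = y \<and> take s ys = w)"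
      by (rule Pr_cong) auto
    also have "\<dots> = N.PP n (\<lambda>(xs,ys). take (Suc s) xs = u \<and> take s ys = w) * qN (Suc s) u w y"
      by (rule N.K_kappa[OF assms u' y' w'])
    also have "N.PP n (\<lambda>(xs,ys). take (Suc s) xs = u \<and> take s ys = w) = N.PP n (\<lambda>\<omega>. ?A \<omega> = u \<and> ?C \<omega> = w)"
      by (rule Pr_cong) auto
    finally show "N.PP n (\<lambda>\<omega>. ?A \<omega> = u \<and> ?B \<omega> = y \<and> ?C \<omega> = w) = N.PP n (\<lambda>\<omega>. ?A \<omega> = u \<and> ?C \<omega> = w) * (\<lambda>(a,b) y w. qsH (Suc s) a b w y) (fl u) y w"
      by (simp add: qN_def fl_def)
  qed
  have flA: "fl (?A \<omega>) = ?A2 \<omega>" if "\<omega> \<in> ?S" for \<omega>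
  proof -
    obtain xs ys where om: "\<omega> = (xs, ys)" by fastforce
    have "s < length xs" using that om assms unfolding Omega_def lists_n_def by auto
    then show ?thesis unfolding om fl_def by (simp add: last_take_Suc)
  qed
  have b: "cmi ?S pm (\<lambda>\<omega>. fl (?A \<omega>)) ?B ?C = cmi ?S pm ?A2 ?B ?C" for pm
    by (rule cmi_cong) (simp_all add: flA)
  have c: "cmi ?S (N.J n) ?A2 ?B ?C = cmi ?S (J n) ?A2 ?B ?C"
  proof (rule cmi_dist_eq[OF N.finO G_dist[OF assms], where A'="\<lambda>(a,b,v). (a,b)" and B'="\<lambda>(a,b,v). v ! s" and C'="\<lambda>(a,b,v). take s v"])
    fix \<omega> assume "\<omega> \<in> ?S"
    then obtain xs ys where om: "\<omega> = (xs, ys)" and "s < length ys" using assms unfolding Omega_def lists_n_def by fastforce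
    then show "?A2 \<omega> = (\<lambda>(a,b,v). (a,b)) (Gt s \<omega>)" "?B \<omega> = (\<lambda>(a,b,v). v ! s) (Gt s \<omega>)" "?C \<omega> = (\<lambda>(a,b,v). take s v) (Gt s \<omega>)"
      unfolding Gt_def by (auto simp: min_def)
  qed
  have e: "cmi ?S (J n) (\<lambda>\<omega>. fl (?A \<omega>)) ?B ?C \<le> cmi ?S (J n) ?A ?B ?C"
    by (rule cmi_dp[OF finO J_nn])
  show ?thesis using a b[of "N.J n"] c b[of "J n"] e by simp
qed

end

context mcq begin

lemma dist_rewrite:
  "(\<Sum>(xs,ys)\<in>Omega W n. pm (xs,ys) * ((1 / real n) * (\<Sum>t = 1..n. d (xs ! (t - 1)) (ys ! (t - 1)))))
   = (1 / real n) * (\<Sum>t = 1..n. \<Sum>\<omega>\<in>Omega W n. pm \<omega> * (\<lambda>(a,b,v). d a (v ! (t - 1))) (Gt (t - 1) \<omega>))"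
proof -
  have "(\<Sum>(xs,ys)\<in>Omega W n. pm (xs,ys) * ((1 / real n) * (\<Sum>t = 1..n. d (xs ! (t - 1)) (ys ! (t - 1)))))
      = (\<Sum>\<omega>\<in>Omega W n. (1 / real n) * (\<Sum>t = 1..n. pm \<omega> * (\<lambda>(a,b,v). d a (v ! (t - 1))) (Gt (t - 1) \<omega>)))"
  proof (rule sum.cong[OF refl], clarify)
    fix xs ys
    have "(\<Sum>t = 1..n. d (xs ! (t - 1)) (ys ! (t - 1))) = (\<Sum>t = 1..n. (\<lambda>(a,b,v). d a (v ! (t - 1))) (Gt (t - 1) (xs,ys)))"
      by (rule sum.cong[OF refl]) (auto simp: Gt_def)
    then show "pm (xs,ys) * ((1 / real n) * (\<Sum>t = 1..n. d (xs ! (t - 1)) (ys ! (t - 1))))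
       = (1 / real n) * (\<Sum>t = 1..n. pm (xs,ys) * (\<lambda>(a,b,v). d a (v ! (t - 1))) (Gt (t - 1) (xs,ys)))"
      by (simp add: sum_distrib_left[symmetric])
  qed
  also have "\<dots> = (1 / real n) * (\<Sum>\<omega>\<in>Omega W n. \<Sum>t = 1..n. pm \<omega> * (\<lambda>(a,b,v). d a (v ! (t - 1))) (Gt (t - 1) \<omega>))"
    by (rule sum_distrib_left[symmetric])
  also have "\<dots> = (1 / real n) * (\<Sum>t = 1..n. \<Sum>\<omega>\<in>Omega W n. pm \<omega> * (\<lambda>(a,b,v). d a (v ! (t - 1))) (Gt (t - 1) \<omega>))"
    by (subst sum.swap) (rule refl)
  finally show ?thesis .
qed

lemma dist_eq: "dist_avg W p1 Q qN d n = dist_avg W p1 Q q d n"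
proof -
  have "(\<Sum>\<omega>\<in>Omega W n. joint p1 Q qN n \<omega> * (\<lambda>(a,b,v). d a (v ! (t - 1))) (Gt (t - 1) \<omega>))
      = (\<Sum>\<omega>\<in>Omega W n. J n \<omega> * (\<lambda>(a,b,v). d a (v ! (t - 1))) (Gt (t - 1) \<omega>))" if t: "t \<in> {1..n}" for t
  proof -
    obtain s where s: "t = Suc s" using t by (cases t) auto
    have "Suc s \<le> n" using t s by auto
    then show ?thesis unfolding s by (simp only: diff_Suc_1) (rule expect_dist_eq[OF finO G_dist])
  qed
  then have eqsum: "(\<Sum>t = 1..n. \<Sum>\<omega>\<in>Omega W n. joint p1 Q qN n \<omega> * (\<lambda>(a,b,v). d a (v ! (t - 1))) (Gt (t - 1) \<omega>))
      = (\<Sum>t = 1..n. \<Sum>\<omega>\<in>Omega W n. J n \<omega> * (\<lambda>(a,b,v). d a (v ! (t - 1))) (Gt (t - 1) \<omega>))"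
    by (rule sum.cong[OF refl])
  show ?thesis unfolding dist_avg_def dist_rewrite[of "joint p1 Q qN n"] dist_rewrite[of "J n"]
    by (simp only: eqsum)
qed

lemma leak_le: "leak_avg W p1 Q qN n \<le> leak_avg W p1 Q q n"
  unfolding leak_avg_def
proof (rule mult_left_mono)
  show "0 \<le> 1 / real n" by simp
  show "(\<Sum>t = 1..n. cmi (Omega W n) (joint p1 Q qN n) (\<lambda>(xs, ys). take t xs) (\<lambda>(xs, ys). ys ! (t - 1)) (\<lambda>(xs, ys). take (t - 1) ys))
      \<le> (\<Sum>t = 1..n. cmi (Omega W n) (J n) (\<lambda>(xs, ys). take t xs) (\<lambda>(xs, ys). ys ! (t - 1)) (\<lambda>(xs, ys). take (t - 1) ys))"
  proof (rule sum_mono)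
    fix t assume t: "t \<in> {1..n}"
    obtain s where s: "t = Suc s" using t by (cases t) auto
    have "Suc s \<le> n" using t s by auto
    then show "cmi (Omega W n) (joint p1 Q qN n) (\<lambda>(xs, ys). take t xs) (\<lambda>(xs, ys). ys ! (t - 1)) (\<lambda>(xs, ys). take (t - 1) ys)
      \<le> cmi (Omega W n) (J n) (\<lambda>(xs, ys). take t xs) (\<lambda>(xs, ys). ys ! (t - 1)) (\<lambda>(xs, ys). take (t - 1) ys)"
      unfolding s diff_Suc_1 by (rule leak_term_le)
  qed
qed

end

lemma part1:
  assumes "finite W" "markov_chain W p1 Q"
  shows "(INF q\<in>{q \<in> QH W. feasible W p1 Q d Dbar q}. objective W p1 Q q)
           = (INF q\<in>{q \<in> QS W. feasible W p1 Q d Dbar q}. objective W p1 Q q)"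
proof (rule antisym)
  show "(INF q\<in>{q \<in> QH W. feasible W p1 Q d Dbar q}. objective W p1 Q q)
           \<le> (INF q\<in>{q \<in> QS W. feasible W p1 Q d Dbar q}. objective W p1 Q q)"
    by (rule INF_superset_mono) (auto simp: QS_def)
  show "(INF q\<in>{q \<in> QS W. feasible W p1 Q d Dbar q}. objective W p1 Q q)
           \<le> (INF q\<in>{q \<in> QH W. feasible W p1 Q d Dbar q}. objective W p1 Q q)"
  proof (rule INF_mono)
    fix q assume q: "q \<in> {q \<in> QH W. feasible W p1 Q d Dbar q}"
    interpret mcq W p1 Q q using assms q by (intro mcq.intro) auto
    show "\<exists>n\<in>{q \<in> QS W. feasible W p1 Q d Dbar q}. objective W p1 Q n \<le> objective W p1 Q q"
    proof (intro bexI[of _ qN] CollectI conjI)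
      show "qN \<in> QS W" by (rule qN_QS)
      show "feasible W p1 Q d Dbar qN" using q unfolding feasible_def by (simp add: dist_eq)
      show "objective W p1 Q qN \<le> objective W p1 Q q" unfolding objective_def
        by (rule Limsup_mono) (simp add: leak_le)
    qed
  qed
qed

lemma ln_telescope_aux:
  fixes a1 a0 b1 b0 c1 c0 k tr :: real
  assumes "a1 > 0" "a0 > 0" "b1 > 0" "b0 > 0" "c1 > 0" "c0 > 0"
    and "a1 = a0 * tr * k" "b1 = b0 * tr"
  shows "ln (k * c0 / c1) = (ln a1 - ln a0) - (ln b1 - ln b0) - (ln c1 - ln c0)"
proof -
  have "0 < b0 * tr" using assms(3,8) by simp
  then have tr: "tr > 0" using assms(4) by (simp add: zero_less_mult_iff)
  have k: "k = a1 * b0 / (a0 * b1)" using assms tr by (simp add: field_simps)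
  have "k * c0 / c1 = exp ((ln a1 - ln a0) - (ln b1 - ln b0) - (ln c1 - ln c0))"
    unfolding k using assms by (simp add: exp_diff exp_add field_simps)
  then show ?thesis by simp
qed

context mcq begin

definition "FF1 n xs0 ys0 i = PP n (\<lambda>(xs,ys). take i xs = take i xs0 \<and> take i ys = take i ys0)"
definition "FF2 n xs0 i = PP n (\<lambda>(xs,ys). take i xs = take i xs0)"
definition "FF3 n ys0 i = PP n (\<lambda>(xs,ys). take i ys = take i ys0)"

lemma FF_pos:
  assumes "(xs0, ys0) \<in> Omega W n" "J n (xs0, ys0) > 0"
  shows "FF1 n xs0 ys0 i > 0" "FF2 n xs0 i > 0" "FF3 n ys0 i > 0"
  unfolding FF1_def FF2_def FF3_def by (rule Pr_pos[where S="Omega W n" and pm="J n", OF finO J_nn assms]; simp)+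

lemma FF_0: "FF1 n xs0 ys0 0 = 1" "FF2 n xs0 0 = 1" "FF3 n ys0 0 = 1"
proof -
  have "sum (J n) (Omega W n) = 1" using PP_total[of n] by (simp add: Pr_def)
  then show "FF1 n xs0 ys0 0 = 1" "FF2 n xs0 0 = 1" "FF3 n ys0 0 = 1"
    unfolding FF1_def FF2_def FF3_def by (simp_all add: Pr_def)
qed

lemma kappa_hyp:
  assumes qf: "q = (\<lambda>t xs ys y. qs t (last xs) (prev xs) ys y)" and sn: "Suc s \<le> n"
    and u: "u \<in> (\<lambda>(xs, ys). take (Suc s) xs) ` Omega W n" and y: "y \<in> (\<lambda>(xs, ys). ys ! s) ` Omega W n"
    and w: "w \<in> (\<lambda>(xs, ys). take s ys) ` Omega W n"
  shows "PP n (\<lambda>\<omega>. (\<lambda>(xs, ys). take (Suc s) xs) \<omega> = u \<and> (\<lambda>(xs, ys). ys ! s) \<omega> = y \<and> (\<lambda>(xs, ys). take s ys) \<omega> = w)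
       = PP n (\<lambda>\<omega>. (\<lambda>(xs, ys). take (Suc s) xs) \<omega> = u \<and> (\<lambda>(xs, ys). take s ys) \<omega> = w) * (\<lambda>(a,b) y w. qs (Suc s) a b w y) ((\<lambda>u. (last u, prev u)) u) y w"
proof -
  have u': "u \<in> lists_n W (Suc s)" using u imgs[OF sn] by auto
  have y': "y \<in> W" using y imgs[OF sn] by auto
  have w': "w \<in> lists_n W s" using w imgs[OF sn] by auto
  have "PP n (\<lambda>\<omega>. (\<lambda>(xs, ys). take (Suc s) xs) \<omega> = u \<and> (\<lambda>(xs, ys). ys ! s) \<omega> = y \<and> (\<lambda>(xs, ys). take s ys) \<omega> = w)
      = PP n (\<lambda>(xs,ys). take (Suc s) xs = u \<and> ys ! s = y \<and> take s ys = w)"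
    by (rule Pr_cong) auto
  also have "\<dots> = PP n (\<lambda>(xs,ys). take (Suc s) xs = u \<and> take s ys = w) * q (Suc s) u w y"
    by (rule K_kappa[OF sn u' y' w'])
  also have "PP n (\<lambda>(xs,ys). take (Suc s) xs = u \<and> take s ys = w) = PP n (\<lambda>\<omega>. (\<lambda>(xs, ys). take (Suc s) xs) \<omega> = u \<and> (\<lambda>(xs, ys). take s ys) \<omega> = w)"
    by (rule Pr_cong) auto
  finally show ?thesis by (simp add: qf)
qed

lemma core_kappa:
  assumes qf: "q = (\<lambda>t xs ys y. qs t (last xs) (prev xs) ys y)" and sn: "Suc s \<le> n" and om: "(xs0, ys0) \<in> Omega W n"
  shows "FF1 n xs0 ys0 (Suc s) = FF1 n xs0 ys0 s * trn p1 Q (take s xs0) (xs0 ! s) * qs (Suc s) (xs0 ! s) (prev (take (Suc s) xs0)) (take s ys0) (ys0 ! s)"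
    "FF2 n xs0 (Suc s) = FF2 n xs0 s * trn p1 Q (take s xs0) (xs0 ! s)"
proof -
  have l: "s < length xs0" "s < length ys0" "set xs0 \<subseteq> W" "set ys0 \<subseteq> W" using om sn unfolding Omega_def lists_n_def by auto
  have tx: "take (Suc s) xs0 = take s xs0 @ [xs0 ! s]" and ty: "take (Suc s) ys0 = take s ys0 @ [ys0 ! s]"
    using l by (simp_all add: take_Suc_conv_app_nth)
  have m: "take s xs0 \<in> lists_n W s" "xs0 ! s \<in> W" "take s ys0 \<in> lists_n W s" "ys0 ! s \<in> W" "take (Suc s) xs0 \<in> lists_n W (Suc s)"
    using l unfolding lists_n_def by (auto dest: in_set_takeD)
  have "FF1 n xs0 ys0 (Suc s) = PP n (\<lambda>(xs,ys). take (Suc s) xs = take (Suc s) xs0 \<and> ys ! s = ys0 ! s \<and> take s ys = take s ys0)"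
    unfolding FF1_def
  proof (rule Pr_cong, clarify)
    fix xs ys assume "(xs, ys) \<in> Omega W n"
    then have "s < length ys" using sn unfolding Omega_def lists_n_def by auto
    then show "(take (Suc s) xs = take (Suc s) xs0 \<and> take (Suc s) ys = take (Suc s) ys0) =
           (take (Suc s) xs = take (Suc s) xs0 \<and> ys ! s = ys0 ! s \<and> take s ys = take s ys0)"
      using ty by (auto simp: take_Suc_conv_app_nth)
  qed
  also have "\<dots> = PP n (\<lambda>(xs,ys). take (Suc s) xs = take (Suc s) xs0 \<and> take s ys = take s ys0) * q (Suc s) (take (Suc s) xs0) (take s ys0) (ys0 ! s)"
    by (rule K_kappa[OF sn m(5,4,3)])
  also have "PP n (\<lambda>(xs,ys). take (Suc s) xs = take (Suc s) xs0 \<and> take s ys = take s ys0) = J s (take s xs0, take s ys0) * trn p1 Q (take s xs0) (xs0 ! s)"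
    unfolding tx by (rule K2[OF sn m(1,2,3)])
  also have "J s (take s xs0, take s ys0) = FF1 n xs0 ys0 s"
    unfolding FF1_def using sn by (intro K0[symmetric] m) auto
  also have "q (Suc s) (take (Suc s) xs0) (take s ys0) (ys0 ! s) = qs (Suc s) (xs0 ! s) (prev (take (Suc s) xs0)) (take s ys0) (ys0 ! s)"
    unfolding qf using l by (simp add: last_take_Suc)
  finally show "FF1 n xs0 ys0 (Suc s) = FF1 n xs0 ys0 s * trn p1 Q (take s xs0) (xs0 ! s) * qs (Suc s) (xs0 ! s) (prev (take (Suc s) xs0)) (take s ys0) (ys0 ! s)" .
  show "FF2 n xs0 (Suc s) = FF2 n xs0 s * trn p1 Q (take s xs0) (xs0 ! s)"
    unfolding FF2_def tx by (rule K3[OF sn m(2)])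
qed

lemma core_ratio:
  assumes qf: "q = (\<lambda>t xs ys y. qs t (last xs) (prev xs) ys y)" and sn: "Suc s \<le> n"
    and om: "(xs0, ys0) \<in> Omega W n" and pos: "J n (xs0, ys0) > 0"
  shows "cmiL (Omega W n) (J n) (\<lambda>(xs, ys). (xs ! s, prev (take (Suc s) xs))) (\<lambda>(xs, ys). ys ! s) (\<lambda>(xs, ys). take s ys) (xs0, ys0)
     = ln (qs (Suc s) (xs0 ! s) (prev (take (Suc s) xs0)) (take s ys0) (ys0 ! s) * FF3 n ys0 s / FF3 n ys0 (Suc s))"
proof -
  let ?S = "Omega W n"
  let ?A = "\<lambda>(xs, ys). take (Suc s) xs" and ?B = "\<lambda>(xs, ys). ys ! s" and ?C = "\<lambda>(xs, ys). take s ys"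
  let ?A2 = "\<lambda>(xs, ys). (xs ! s, prev (take (Suc s) xs))"
  define fl where "fl u = (last u, prev u)" for u :: "'a list"
  let ?k = "qs (Suc s) (xs0 ! s) (prev (take (Suc s) xs0)) (take s ys0) (ys0 ! s)"
  have l: "s < length xs0" "s < length ys0" using om sn unfolding Omega_def lists_n_def by auto
  have flA: "fl (?A \<omega>) = ?A2 \<omega>" if "\<omega> \<in> ?S" for \<omega>
  proof -
    obtain xs ys where om: "\<omega> = (xs, ys)" by fastforce
    have "s < length xs" using that om sn unfolding Omega_def lists_n_def by auto
    then show ?thesis unfolding om fl_def by (simp add: last_take_Suc)
  qed
  have kl: "PP n (\<lambda>\<omega>. fl (?A \<omega>) = fl (?A (xs0,ys0)) \<and> ?B \<omega> = ?B (xs0,ys0) \<and> ?C \<omega> = ?C (xs0,ys0))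
     = PP n (\<lambda>\<omega>. fl (?A \<omega>) = fl (?A (xs0,ys0)) \<and> ?C \<omega> = ?C (xs0,ys0)) * (\<lambda>(a,b) y w. qs (Suc s) a b w y) (fl (?A (xs0,ys0))) (?B (xs0,ys0)) (?C (xs0,ys0))"
  proof (rule kappa_lemma[where A="?A" and B="?B" and C="?C" and f=fl and \<kappa>="\<lambda>(a,b) y w. qs (Suc s) a b w y" and pm="J n", OF finO])
    fix a b c assume "a \<in> ?A ` ?S" "b \<in> ?B ` ?S" "c \<in> ?C ` ?S"
    then show "PP n (\<lambda>w. ?A w = a \<and> ?B w = b \<and> ?C w = c) = PP n (\<lambda>w. ?A w = a \<and> ?C w = c) * (\<lambda>(a,b) y w. qs (Suc s) a b w y) (fl a) b c"
      unfolding fl_def by (rule kappa_hyp[OF qf sn])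
  qed (use om in auto)
  have e1: "PP n (\<lambda>\<omega>. fl (?A \<omega>) = fl (?A (xs0,ys0)) \<and> ?B \<omega> = ?B (xs0,ys0) \<and> ?C \<omega> = ?C (xs0,ys0))
     = PP n (\<lambda>w'. ?A2 w' = ?A2 (xs0,ys0) \<and> ?B w' = ?B (xs0,ys0) \<and> ?C w' = ?C (xs0,ys0))"
    by (rule Pr_cong) (simp add: flA flA[OF om, simplified])
  have e2: "PP n (\<lambda>\<omega>. fl (?A \<omega>) = fl (?A (xs0,ys0)) \<and> ?C \<omega> = ?C (xs0,ys0))
     = PP n (\<lambda>w'. ?A2 w' = ?A2 (xs0,ys0) \<and> ?C w' = ?C (xs0,ys0))"
    by (rule Pr_cong) (simp add: flA flA[OF om, simplified])
  have e3: "(\<lambda>(a,b) y w. qs (Suc s) a b w y) (fl (?A (xs0,ys0))) (?B (xs0,ys0)) (?C (xs0,ys0)) = ?k"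
    using l by (simp add: fl_def last_take_Suc)
  have pabc: "PP n (\<lambda>w'. ?A2 w' = ?A2 (xs0,ys0) \<and> ?B w' = ?B (xs0,ys0) \<and> ?C w' = ?C (xs0,ys0))
      = PP n (\<lambda>w'. ?A2 w' = ?A2 (xs0,ys0) \<and> ?C w' = ?C (xs0,ys0)) * ?k"
    using kl unfolding e1 e2 e3 .
  have pc: "PP n (\<lambda>w'. ?C w' = ?C (xs0,ys0)) = FF3 n ys0 s" unfolding FF3_def by (rule Pr_cong) auto
  have pbc: "PP n (\<lambda>w'. ?B w' = ?B (xs0,ys0) \<and> ?C w' = ?C (xs0,ys0)) = FF3 n ys0 (Suc s)"
    unfolding FF3_def
  proof (rule Pr_cong)
    fix \<omega> assume "\<omega> \<in> ?S"
    then obtain xs ys where om': "\<omega> = (xs, ys)" and "s < length ys" using sn unfolding Omega_def lists_n_def by fastforce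
    then show "(?B \<omega> = ?B (xs0,ys0) \<and> ?C \<omega> = ?C (xs0,ys0)) = (case \<omega> of (xs, ys) \<Rightarrow> take (Suc s) ys = take (Suc s) ys0)"
      using l by (auto simp: take_Suc_conv_app_nth)
  qed
  have pac: "PP n (\<lambda>w'. ?A2 w' = ?A2 (xs0,ys0) \<and> ?C w' = ?C (xs0,ys0)) > 0"
    using Pr_pos[where S="?S" and pm="J n", OF finO J_nn om pos] by simp
  show ?thesis unfolding cmiL_def pabc pc pbc using pac by simp
qed

end

lemma tele: fixes n :: nat and f :: "nat \<Rightarrow> real" shows "(\<Sum>t = 1..n. f t - f (t - 1)) = f n - f 0"
  by (induction n) (simp_all add: sum.cl_ivl_Suc)

context mcq begin

definition "ct n t \<omega> = cmiL (Omega W n) (J n) (\<lambda>(xs, ys). (xs ! (t - 1), prev (take t xs))) (\<lambda>(xs, ys). ys ! (t - 1)) (\<lambda>(xs, ys). take (t - 1) ys) \<omega>"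

lemma core_ln:
  assumes qf: "q = (\<lambda>t xs ys y. qs t (last xs) (prev xs) ys y)" and t: "t \<in> {1..n}"
    and om: "(xs0, ys0) \<in> Omega W n" and pos: "J n (xs0, ys0) > 0"
  shows "ct n t (xs0, ys0) = (ln (FF1 n xs0 ys0 t) - ln (FF1 n xs0 ys0 (t - 1))) - (ln (FF2 n xs0 t) - ln (FF2 n xs0 (t - 1)))
      - (ln (FF3 n ys0 t) - ln (FF3 n ys0 (t - 1)))"
proof -
  obtain s where s: "t = Suc s" using t by (cases t) auto
  have sn: "Suc s \<le> n" using t s by auto
  note ck = core_kappa[OF qf sn om]
  show ?thesis unfolding s diff_Suc_1 ct_def core_ratio[OF qf sn om pos]
    by (rule ln_telescope_aux[OF FF_pos(1)[OF om pos, of "Suc s"] FF_pos(1)[OF om pos, of s] FF_pos(2)[OF om pos, of "Suc s"] FF_pos(2)[OF om pos, of s]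
          FF_pos(3)[OF om pos, of "Suc s"] FF_pos(3)[OF om pos, of s] ck])
qed

lemma sum_ct:
  assumes qf: "q = (\<lambda>t xs ys y. qs t (last xs) (prev xs) ys y)"
    and om: "(xs0, ys0) \<in> Omega W n" and pos: "J n (xs0, ys0) > 0"
  shows "(\<Sum>t = 1..n. ct n t (xs0, ys0)) = ln (FF1 n xs0 ys0 n) - ln (FF2 n xs0 n) - ln (FF3 n ys0 n)"
proof -
  define g where "g i = ln (FF1 n xs0 ys0 i) - ln (FF2 n xs0 i) - ln (FF3 n ys0 i)" for i
  have "(\<Sum>t = 1..n. ct n t (xs0, ys0)) = (\<Sum>t = 1..n. g t - g (t - 1))"
  proof (rule sum.cong[OF refl])
    fix t assume t: "t \<in> {1..n}"
    show "ct n t (xs0, ys0) = g t - g (t - 1)" unfolding g_def using core_ln[OF qf t om pos] by linarith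
  qed
  also have "\<dots> = g n - g 0" by (rule tele)
  also have "\<dots> = ln (FF1 n xs0 ys0 n) - ln (FF2 n xs0 n) - ln (FF3 n ys0 n)" unfolding g_def by (simp add: FF_0)
  finally show ?thesis .
qed

lemma mi_point:
  assumes om: "(xs0, ys0) \<in> Omega W n" and pos: "J n (xs0, ys0) > 0"
  shows "cmiL (Omega W n) (J n) (\<lambda>(xs, ys). xs) (\<lambda>(xs, ys). ys) (\<lambda>_. ()) (xs0, ys0) = ln (FF1 n xs0 ys0 n) - ln (FF2 n xs0 n) - ln (FF3 n ys0 n)"
proof -
  have tk: "take n xs = xs" "take n ys = ys" if "(xs, ys) \<in> Omega W n" for xs ys
    using that unfolding Omega_def lists_n_def by auto
  have tk0: "take n xs0 = xs0" "take n ys0 = ys0" using tk[OF om] by auto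
  have e1: "PP n (\<lambda>w'. (\<lambda>(xs, ys). xs) w' = (\<lambda>(xs, ys). xs) (xs0, ys0) \<and> (\<lambda>(xs, ys). ys) w' = (\<lambda>(xs, ys). ys) (xs0, ys0) \<and> () = ()) = FF1 n xs0 ys0 n"
    unfolding FF1_def by (rule Pr_cong) (auto simp: tk tk0)
  have e2: "PP n (\<lambda>w'. (\<lambda>(xs, ys). xs) w' = (\<lambda>(xs, ys). xs) (xs0, ys0) \<and> () = ()) = FF2 n xs0 n"
    unfolding FF2_def by (rule Pr_cong) (auto simp: tk tk0)
  have e3: "PP n (\<lambda>w'. (\<lambda>(xs, ys). ys) w' = (\<lambda>(xs, ys). ys) (xs0, ys0) \<and> () = ()) = FF3 n ys0 n"
    unfolding FF3_def by (rule Pr_cong) (auto simp: tk tk0)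
  have e4: "PP n (\<lambda>w'. () = ()) = 1" using PP_total[of n] by simp
  note p = FF_pos[OF om pos, of n]
  show ?thesis unfolding cmiL_def e1 e2 e3 e4 using p by (simp add: ln_div ln_mult_pos)
qed

lemma part2a:
  assumes qf: "q = (\<lambda>t xs ys y. qs t (last xs) (prev xs) ys y)"
  shows "mi (Omega W n) (J n) (\<lambda>(xs, ys). xs) (\<lambda>(xs, ys). ys)
     = (\<Sum>t = 1..n. cmi (Omega W n) (J n) (\<lambda>(xs, ys). (xs ! (t - 1), prev (take t xs))) (\<lambda>(xs, ys). ys ! (t - 1)) (\<lambda>(xs, ys). take (t - 1) ys))"
proof -
  have "(\<Sum>t = 1..n. cmi (Omega W n) (J n) (\<lambda>(xs, ys). (xs ! (t - 1), prev (take t xs))) (\<lambda>(xs, ys). ys ! (t - 1)) (\<lambda>(xs, ys). take (t - 1) ys))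
      = (\<Sum>t = 1..n. \<Sum>\<omega>\<in>Omega W n. J n \<omega> * ct n t \<omega>)"
    unfolding ct_def by (rule sum.cong[OF refl]) (rule cmi_pointwise[OF finO J_nn])
  also have "\<dots> = (\<Sum>\<omega>\<in>Omega W n. J n \<omega> * (\<Sum>t = 1..n. ct n t \<omega>))"
    by (subst sum.swap) (simp add: sum_distrib_left)
  also have "\<dots> = (\<Sum>\<omega>\<in>Omega W n. J n \<omega> * cmiL (Omega W n) (J n) (\<lambda>(xs, ys). xs) (\<lambda>(xs, ys). ys) (\<lambda>_. ()) \<omega>)"
  proof (rule sum.cong[OF refl])
    fix \<omega> assume om: "\<omega> \<in> Omega W n"
    obtain xs0 ys0 where w: "\<omega> = (xs0, ys0)" by fastforce
    show "J n \<omega> * (\<Sum>t = 1..n. ct n t \<omega>) = J n \<omega> * cmiL (Omega W n) (J n) (\<lambda>(xs, ys). xs) (\<lambda>(xs, ys). ys) (\<lambda>_. ()) \<omega>"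
    proof (cases "J n \<omega> > 0")
      case True
      have om': "(xs0, ys0) \<in> Omega W n" using om w by simp
      have p: "J n (xs0, ys0) > 0" using True w by simp
      show ?thesis unfolding w using sum_ct[OF qf om' p] mi_point[OF om' p] by simp
    next
      case False
      then have "J n \<omega> = 0" using J_nn[OF om] by simp
      then show ?thesis by simp
    qed
  qed
  also have "\<dots> = mi (Omega W n) (J n) (\<lambda>(xs, ys). xs) (\<lambda>(xs, ys). ys)"
    unfolding mi_def by (rule cmi_pointwise[OF finO J_nn, symmetric])
  finally show ?thesis by simp
qed

lemma part2b:
  assumes qf: "q = (\<lambda>t xs ys y. qs t (last xs) (prev xs) ys y)" and t: "t \<in> {1..n}"
  shows "(\<Sum>yt\<in>lists_n W t. \<Sum>xt\<in>W. \<Sum>xp\<in>(if t = 1 then {None} else Some ` W).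
           let m = PP n (\<lambda>(xs, ys). xs ! (t - 1) = xt \<and> prev (take t xs) = xp \<and> take t ys = yt);
               cond = PP n (\<lambda>(xs, ys). take t ys = yt) / PP n (\<lambda>(xs, ys). take (t - 1) ys = butlast yt)
           in if m > 0 then m * ln (qs t xt xp (butlast yt) (last yt) / cond) else 0)
       = cmi (Omega W n) (J n) (\<lambda>(xs, ys). (xs ! (t - 1), prev (take t xs))) (\<lambda>(xs, ys). ys ! (t - 1)) (\<lambda>(xs, ys). take (t - 1) ys)"
proof -
  obtain s where s: "t = Suc s" using t by (cases t) auto
  have sn: "Suc s \<le> n" using t s by auto
  define G where "G = (\<lambda>(xs::'a list, ys::'a list). (take t ys, xs ! (t - 1), prev (take t xs)))"
  define L where "L = (\<lambda>(yt, xt, xp). ln (qs t xt xp (butlast yt) (last yt) / (PP n (\<lambda>(xs, ys). take t ys = yt) / PP n (\<lambda>(xs, ys). take (t - 1) ys = butlast yt))))"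
  define T where "T = lists_n W t \<times> W \<times> (if t = 1 then {None} else Some ` W)"
  have PG: "PP n (\<lambda>(xs, ys). xs ! (t - 1) = xt \<and> prev (take t xs) = xp \<and> take t ys = yt) = PP n (\<lambda>\<omega>. G \<omega> = (yt, xt, xp))" for yt xt xp
    unfolding G_def by (rule Pr_cong) auto
  have ifeq: "0 \<le> P \<Longrightarrow> (if 0 < P then P * l else 0) = P * l" for P l :: real by auto
  have fXP: "finite (if t = 1 then {None} else Some ` W)" using finW by (cases "t = 1") simp_all
  have finT: "finite T" unfolding T_def by (intro finite_cartesian_product finL finW fXP)
  have GT: "G \<omega> \<in> T" if "\<omega> \<in> Omega W n" for \<omega>
  proof -
    obtain xs ys where om: "\<omega> = (xs, ys)" by fastforce
    have l: "length xs = n" "length ys = n" "set xs \<subseteq> W" "set ys \<subseteq> W" using that om unfolding Omega_def lists_n_def by auto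
    have sl: "s < length xs" using l sn by simp
    have tx: "take t xs = take s xs @ [xs ! s]" unfolding s using sl by (rule take_Suc_conv_app_nth)
    have p: "prev (take t xs) \<in> (if t = 1 then {None} else Some ` W)"
    proof (cases s)
      case 0 then show ?thesis unfolding s by (simp add: prev_def)
    next
      case (Suc r)
      have ne: "take s xs \<noteq> []" using sl Suc by (cases xs) auto
      have "last (take s xs) \<in> set (take s xs)" using ne by (rule last_in_set)
      then have "last (take s xs) \<in> set xs" by (rule in_set_takeD)
      then have lW: "last (take s xs) \<in> W" using l(3) by blast
      have t1: "t \<noteq> 1" using s Suc by simp
      have "prev (take t xs) = Some (last (take s xs))" unfolding tx prev_snoc using ne by simp
      then show ?thesis using t1 lW by simp
    qed
    have "xs ! s \<in> set xs" using sl by (rule nth_mem)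
    then have x: "xs ! (t - 1) \<in> W" using l(3) s by auto
    have "set (take t ys) \<subseteq> W" using l(4) by (meson order_trans set_take_subset)
    then have y: "take t ys \<in> lists_n W t" unfolding lists_n_def using l(2) sn s by simp
    have "G \<omega> = (take t ys, xs ! (t - 1), prev (take t xs))" unfolding G_def om by simp
    then show ?thesis unfolding T_def using p x y by simp
  qed
  have "(\<Sum>yt\<in>lists_n W t. \<Sum>xt\<in>W. \<Sum>xp\<in>(if t = 1 then {None} else Some ` W).
           let m = PP n (\<lambda>(xs, ys). xs ! (t - 1) = xt \<and> prev (take t xs) = xp \<and> take t ys = yt);
               cond = PP n (\<lambda>(xs, ys). take t ys = yt) / PP n (\<lambda>(xs, ys). take (t - 1) ys = butlast yt)
           in if m > 0 then m * ln (qs t xt xp (butlast yt) (last yt) / cond) else 0)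
      = (\<Sum>yt\<in>lists_n W t. \<Sum>xt\<in>W. \<Sum>xp\<in>(if t = 1 then {None} else Some ` W).
           (\<lambda>z. if PP n (\<lambda>\<omega>. G \<omega> = z) > 0 then PP n (\<lambda>\<omega>. G \<omega> = z) * L z else 0) (yt, xt, xp))"
  proof (intro sum.cong refl)
    fix yt xt xp
    show "(let m = PP n (\<lambda>(xs, ys). xs ! (t - 1) = xt \<and> prev (take t xs) = xp \<and> take t ys = yt);
               cond = PP n (\<lambda>(xs, ys). take t ys = yt) / PP n (\<lambda>(xs, ys). take (t - 1) ys = butlast yt)
           in if m > 0 then m * ln (qs t xt xp (butlast yt) (last yt) / cond) else 0)
        = (\<lambda>z. if PP n (\<lambda>\<omega>. G \<omega> = z) > 0 then PP n (\<lambda>\<omega>. G \<omega> = z) * L z else 0) (yt, xt, xp)"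
      by (simp only: Let_def PG L_def prod.case)
  qed
  also have "\<dots> = (\<Sum>z\<in>T. if PP n (\<lambda>\<omega>. G \<omega> = z) > 0 then PP n (\<lambda>\<omega>. G \<omega> = z) * L z else 0)"
    unfolding T_def sum.cartesian_product' ..
  also have "\<dots> = (\<Sum>z\<in>T. PP n (\<lambda>\<omega>. G \<omega> = z) * L z)"
    by (rule sum.cong[OF refl]) (rule ifeq[OF Pr_nonneg[OF J_nn]])
  also have "\<dots> = (\<Sum>\<omega>\<in>Omega W n. J n \<omega> * L (G \<omega>))"
    by (rule sum_Pr_group[OF finO finT GT])
  also have "\<dots> = (\<Sum>\<omega>\<in>Omega W n. J n \<omega> * ct n t \<omega>)"
  proof (rule sum.cong[OF refl])
    fix \<omega> assume om: "\<omega> \<in> Omega W n"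
    obtain xs0 ys0 where w: "\<omega> = (xs0, ys0)" by fastforce
    show "J n \<omega> * L (G \<omega>) = J n \<omega> * ct n t \<omega>"
    proof (cases "J n \<omega> > 0")
      case True
      have om': "(xs0, ys0) \<in> Omega W n" using om w by simp
      have p: "J n (xs0, ys0) > 0" using True w by simp
      have l: "s < length ys0" using om' sn unfolding Omega_def lists_n_def by auto
      have bl: "butlast (take (Suc s) ys0) = take s ys0" using l by (simp add: take_Suc_conv_app_nth)
      have la: "last (take (Suc s) ys0) = ys0 ! s" using l by (simp add: last_take_Suc)
      have "L (G \<omega>) = ln (qs (Suc s) (xs0 ! s) (prev (take (Suc s) xs0)) (take s ys0) (ys0 ! s) / (FF3 n ys0 (Suc s) / FF3 n ys0 s))"
        by (simp only: w G_def L_def FF3_def s prod.case diff_Suc_1 bl la)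
      also have "\<dots> = ct n t \<omega>" unfolding w s ct_def diff_Suc_1 core_ratio[OF qf sn om' p] by simp
      finally show ?thesis by simp
    next
      case False
      then have "J n \<omega> = 0" using J_nn[OF om] by simp
      then show ?thesis by simp
    qed
  qed
  also have "\<dots> = cmi (Omega W n) (J n) (\<lambda>(xs, ys). (xs ! (t - 1), prev (take t xs))) (\<lambda>(xs, ys). ys ! (t - 1)) (\<lambda>(xs, ys). take (t - 1) ys)"
    unfolding ct_def by (rule cmi_pointwise[OF finO J_nn, symmetric])
  finally show ?thesis .
qed

end

theorem theorem1:
  fixes W :: "'a set" and p1 :: "'a \<Rightarrow> real" and Q :: "'a \<Rightarrow> 'a \<Rightarrow> real"
    and d :: "'a \<Rightarrow> 'a \<Rightarrow> real" and Dbar :: real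
  assumes "finite W"
    and "markov_chain W p1 Q"
  shows "((INF q\<in>{q \<in> QH W. feasible W p1 Q d Dbar q}. objective W p1 Q q)
           = (INF q\<in>{q \<in> QS W. feasible W p1 Q d Dbar q}. objective W p1 Q q))
         \<and> (\<forall>qs :: nat \<Rightarrow> 'a \<Rightarrow> 'a option \<Rightarrow> 'a list \<Rightarrow> 'a \<Rightarrow> real.
          (\<lambda>t xs ys y. qs t (last xs) (prev xs) ys y) \<in> QH W \<longrightarrow> (\<forall>n::nat.
          let q = (\<lambda>t xs ys y. qs t (last xs) (prev xs) ys y);
              S = Omega W n; pm = joint p1 Q q n
          in mi S pm (\<lambda>(xs, ys). xs) (\<lambda>(xs, ys). ys)
               = (\<Sum>t = 1..n. cmi S pm (\<lambda>(xs, ys). (xs ! (t - 1), prev (take t xs)))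
                                  (\<lambda>(xs, ys). ys ! (t - 1)) (\<lambda>(xs, ys). take (t - 1) ys))
           \<and> mi S pm (\<lambda>(xs, ys). xs) (\<lambda>(xs, ys). ys)
               = (\<Sum>t = 1..n. \<Sum>yt\<in>lists_n W t. \<Sum>xt\<in>W.
                    \<Sum>xp\<in>(if t = 1 then {None} else Some ` W).
                      let m = Pr S pm (\<lambda>(xs, ys). xs ! (t - 1) = xt \<and> prev (take t xs) = xp
                                                  \<and> take t ys = yt);
                          cond = Pr S pm (\<lambda>(xs, ys). take t ys = yt)
                                 / Pr S pm (\<lambda>(xs, ys). take (t - 1) ys = butlast yt)
                      in if m > 0 then m * ln (qs t xt xp (butlast yt) (last yt) / cond) else 0)))"
proof (rule conjI)
  show "(INF q\<in>{q \<in> QH W. feasible W p1 Q d Dbar q}. objective W p1 Q q)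
           = (INF q\<in>{q \<in> QS W. feasible W p1 Q d Dbar q}. objective W p1 Q q)"
    by (rule part1[OF assms])
  show "\<forall>qs :: nat \<Rightarrow> 'a \<Rightarrow> 'a option \<Rightarrow> 'a list \<Rightarrow> 'a \<Rightarrow> real.
          (\<lambda>t xs ys y. qs t (last xs) (prev xs) ys y) \<in> QH W \<longrightarrow> (\<forall>n::nat.
          let q = (\<lambda>t xs ys y. qs t (last xs) (prev xs) ys y);
              S = Omega W n; pm = joint p1 Q q n
          in mi S pm (\<lambda>(xs, ys). xs) (\<lambda>(xs, ys). ys)
               = (\<Sum>t = 1..n. cmi S pm (\<lambda>(xs, ys). (xs ! (t - 1), prev (take t xs)))
                                  (\<lambda>(xs, ys). ys ! (t - 1)) (\<lambda>(xs, ys). take (t - 1) ys))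
           \<and> mi S pm (\<lambda>(xs, ys). xs) (\<lambda>(xs, ys). ys)
               = (\<Sum>t = 1..n. \<Sum>yt\<in>lists_n W t. \<Sum>xt\<in>W.
                    \<Sum>xp\<in>(if t = 1 then {None} else Some ` W).
                      let m = Pr S pm (\<lambda>(xs, ys). xs ! (t - 1) = xt \<and> prev (take t xs) = xp
                                                  \<and> take t ys = yt);
                          cond = Pr S pm (\<lambda>(xs, ys). take t ys = yt)
                                 / Pr S pm (\<lambda>(xs, ys). take (t - 1) ys = butlast yt)
                      in if m > 0 then m * ln (qs t xt xp (butlast yt) (last yt) / cond) else 0))"
  proof (intro allI impI)
    fix qs :: "nat \<Rightarrow> 'a \<Rightarrow> 'a option \<Rightarrow> 'a list \<Rightarrow> 'a \<Rightarrow> real" and n :: nat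
    assume qH: "(\<lambda>t xs ys y. qs t (last xs) (prev xs) ys y) \<in> QH W"
    interpret mcq W p1 Q "\<lambda>t xs ys y. qs t (last xs) (prev xs) ys y"
      using assms qH by (intro mcq.intro)
    have a: "mi (Omega W n) (J n) (\<lambda>(xs, ys). xs) (\<lambda>(xs, ys). ys)
     = (\<Sum>t = 1..n. cmi (Omega W n) (J n) (\<lambda>(xs, ys). (xs ! (t - 1), prev (take t xs))) (\<lambda>(xs, ys). ys ! (t - 1)) (\<lambda>(xs, ys). take (t - 1) ys))"
      by (rule part2a[OF refl])
    have b: "(\<Sum>t = 1..n. \<Sum>yt\<in>lists_n W t. \<Sum>xt\<in>W. \<Sum>xp\<in>(if t = 1 then {None} else Some ` W).
           let m = PP n (\<lambda>(xs, ys). xs ! (t - 1) = xt \<and> prev (take t xs) = xp \<and> take t ys = yt);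
               cond = PP n (\<lambda>(xs, ys). take t ys = yt) / PP n (\<lambda>(xs, ys). take (t - 1) ys = butlast yt)
           in if m > 0 then m * ln (qs t xt xp (butlast yt) (last yt) / cond) else 0)
       = (\<Sum>t = 1..n. cmi (Omega W n) (J n) (\<lambda>(xs, ys). (xs ! (t - 1), prev (take t xs))) (\<lambda>(xs, ys). ys ! (t - 1)) (\<lambda>(xs, ys). take (t - 1) ys))"
      by (rule sum.cong[OF refl]) (rule part2b[OF refl])
    show "let q = (\<lambda>t xs ys y. qs t (last xs) (prev xs) ys y);
              S = Omega W n; pm = joint p1 Q q n
          in mi S pm (\<lambda>(xs, ys). xs) (\<lambda>(xs, ys). ys)
               = (\<Sum>t = 1..n. cmi S pm (\<lambda>(xs, ys). (xs ! (t - 1), prev (take t xs)))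
                                  (\<lambda>(xs, ys). ys ! (t - 1)) (\<lambda>(xs, ys). take (t - 1) ys))
           \<and> mi S pm (\<lambda>(xs, ys). xs) (\<lambda>(xs, ys). ys)
               = (\<Sum>t = 1..n. \<Sum>yt\<in>lists_n W t. \<Sum>xt\<in>W.
                    \<Sum>xp\<in>(if t = 1 then {None} else Some ` W).
                      let m = Pr S pm (\<lambda>(xs, ys). xs ! (t - 1) = xt \<and> prev (take t xs) = xp
                                                  \<and> take t ys = yt);
                          cond = Pr S pm (\<lambda>(xs, ys). take t ys = yt)
                                 / Pr S pm (\<lambda>(xs, ys). take (t - 1) ys = butlast yt)
                      in if m > 0 then m * ln (qs t xt xp (butlast yt) (last yt) / cond) else 0)"
      unfolding Let_def using a b[unfolded Let_def] by (intro conjI a) (rule trans[OF a b[unfolded Let_def, symmetric]])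
  qed
qed

end
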